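(* Suppose $[X\ Z]$ is $s$-regular ($s=s_1+s_2$) and the parameter $\sigma$ of GPNA satisfies $\sigma\in(0,l_f/2)$. Let $\{\beta^k\}$ be generated by GPNA and $\beta^*$ its limit. Then for all sufficiently large $k$: if $\ell=\ell_{log}$, $\displaystyle \|\beta^{k+1}-\beta^*\|\le\frac{(1+L_f)^2C_f}{2l_f}\|\beta^k-\beta^*\|^2$; if $\ell=\ell_{lin}$, $\beta^{k+1}=\beta^*$ (finite termination).
   Context: Data: $X\in\mathbb{R}^{n\times p_1}$, $Z\in\mathbb{R}^{n\times p_2}$ with rows $x_i,z_i$; $y\in\mathbb{R}^n$ ($y\in\{0,1\}^n$ for $\ell_{log}$); $a,b,c>0$; integers $1\le s_j\le p_j$. Losses $\ell_{lin}(\beta;X,y)=\frac12\sum_i(y_i-\langle x_i,\beta\rangle)^2$, $\ell_{log}(\beta;X,y)=\sum_i(\log(1+\exp\langle x_i,\beta\rangle)-y_i\langle x_i,\beta\rangle)$. Objective $f(\beta)=\frac1n[a\ell(\beta_1;X,y)+b\ell(\beta_2;Z,y)+\frac c2\|X\beta_1-Z\beta_2\|^2]$, $\beta=(\beta_1;\beta_2)$. A matrix is $s$-regular if any $s$ of its columns are linearly independent. Constants: for $\ell_{log}$, $L_f=\lambda_{\max}\big(\frac1n\begin{bmatrix}(a/4+c)X^\top X&-cX^\top Z\\-cZ^\top X&(b/4+c)Z^\top Z\end{bmatrix}\big)$, $l_f=\min_{|T|\le s}\lambda_{\min}\big(\frac cn\begin{bmatrix}X^\top X&-X^\top Z\\-Z^\top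 X&Z^\top Z\end{bmatrix}_{TT}\big)$, $C_f=\frac{3\sqrt2}{n}\max\{a\max_i\|x_i\|_1\lambda_{\max}(X^\top X),\,b\max_i\|z_i\|_1\lambda_{\max}(Z^\top Z)\}$; for $\ell_{lin}$, with $Q=\frac1n\begin{bmatrix}(a+c)X^\top X&-cX^\top Z\\-cZ^\top X&(b+c)Z^\top Z\end{bmatrix}$, $L_f=\lambda_{\max}(Q)$, $l_f=\min_{|T|\le s}\lambda_{\min}(Q_{TT})$; minima over $T\subseteq[p_1+p_2]$. $\Sigma_j=\{v\in\mathbb{R}^{p_j}:\|v\|_0\le s_j\}$, $\Sigma=\{\beta:\beta_j\in\Sigma_j\}$; $\Pi_{\Sigma_j}(w)=\arg\min_{u\in\Sigma_j}\|w-u\|$ (set-valued); $\nabla_jf$ is the gradient in $\beta_j$; $\Gamma(v)$ is the support. GPNA (run without stopping): parameters $\sigma>0$, $\epsilon>0$, $\alpha_0\in(0,1]$, $\gamma\in(0,1)$, start $\beta^0\in\Sigma$. At iteration $k$, for $\alpha>0$ let $\beta^k(\alpha)=(\beta_1^k(\alpha);\beta_2^k(\alpha))$, $\beta_j^k(\alpha)\in\Pi_{\Sigma_j}(\beta_j^k-\alpha\nabla_jf(\beta^k))$. Let $q_k$ be the smallest nonnegative integer with $f(\beta^k(\alpha_0\gamma^{q_k}))\le f(\beta^k)-\frac\sigma2\|\beta^k(\alpha_0\gamma^{q_k})-\beta^k\|^2$; $\alpha_k=\alpha_0\gamma^{q_k}$, $u^k=\beta^k(\alpha_k)$, $\Gamma_k=\Gamma(u^k)$,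 $H^k=\nabla^2f(u^k)$, tentatively $\beta^{k+1}=u^k$. If one of (C1) $\Gamma(\beta_1^k)=\Gamma(u_1^k)$ and $\Gamma(\beta_2^k)=\Gamma(u_2^k)$; (C2) $\|\nabla_1f(u^k)\|<\epsilon$ and $\Gamma(\beta_2^k)=\Gamma(u_2^k)$; (C3) $\|\nabla_2f(u^k)\|<\epsilon$ and $\Gamma(\beta_1^k)=\Gamma(u_1^k)$; (C4) $\|\nabla_1f(u^k)\|<\epsilon$ and $\|\nabla_2f(u^k)\|<\epsilon$ holds, and the Newton system $(H^k)_{\Gamma_k\Gamma_k}(v_{\Gamma_k}-u^k_{\Gamma_k})=-(\nabla f(u^k))_{\Gamma_k}$, $v_{\overline{\Gamma}_k}=0$ has a solution $v^k$ with $f(v^k)\le f(u^k)-\frac\sigma2\|v^k-u^k\|^2$, then set $\beta^{k+1}=v^k$ instead. (Under the hypotheses, the sequence $\{\beta^k\}$ converges.) *)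

theory Defs
  imports "HOL-Analysis.Analysis"
begin

(* Coefficient vectors beta = (beta_1; beta_2) live in real^('p1 + 'p2):
   index Inl i is coordinate i of beta_1, index Inr j is coordinate j of beta_2.
   Data: X :: real^'p1^'n (rows x_i = X $ i), Z :: real^'p2^'n, y :: real^'n,
   so n = CARD('n), p1 = CARD('p1), p2 = CARD('p2). *)

datatype loss = Lin | Log

definition blk1 :: "real^('p1::finite + 'p2::finite) \<Rightarrow> real^'p1" where
  "blk1 b = (\<chi> i. b $ Inl i)"

definition blk2 :: "real^('p1::finite + 'p2::finite) \<Rightarrow> real^'p2" where
  "blk2 b = (\<chi> j. b $ Inr j)"

definition supp :: "real^'m \<Rightarrow> 'm set" where
  "supp v = {i. v $ i \<noteq> 0}"

definition loss_lin :: "real^'p \<Rightarrow> real^'p^'n::finite \<Rightarrow> real^'n \<Rightarrow> real" where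
  "loss_lin bt X y = (1/2) * (\<Sum>i\<in>UNIV. (y $ i - (X $ i) \<bullet> bt)^2)"

definition loss_log :: "real^'p \<Rightarrow> real^'p^'n::finite \<Rightarrow> real^'n \<Rightarrow> real" where
  "loss_log bt X y = (\<Sum>i\<in>UNIV. ln (1 + exp ((X $ i) \<bullet> bt)) - y $ i * ((X $ i) \<bullet> bt))"

definition lossf :: "loss \<Rightarrow> real^'p \<Rightarrow> real^'p^'n::finite \<Rightarrow> real^'n \<Rightarrow> real" where
  "lossf L = (case L of Lin \<Rightarrow> loss_lin | Log \<Rightarrow> loss_log)"

definition obj :: "loss \<Rightarrow> real^'p1^'n \<Rightarrow> real^'p2^'n \<Rightarrow> real^'n \<Rightarrow> real \<Rightarrow> real \<Rightarrow> real
                     \<Rightarrow> real^('p1::finite + 'p2::finite) \<Rightarrow> real" where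
  "obj L X Z y a b c bt =
     (1 / real CARD('n::finite)) *
       (a * lossf L (blk1 bt) X y + b * lossf L (blk2 bt) Z y
        + (c/2) * (norm (X *v blk1 bt - Z *v blk2 bt))^2)"

definition grad :: "(real^'m::finite \<Rightarrow> real) \<Rightarrow> real^'m \<Rightarrow> real^'m" where
  "grad F x = (SOME g. (F has_derivative (\<lambda>h. g \<bullet> h)) (at x))"

definition hess :: "(real^'m::finite \<Rightarrow> real) \<Rightarrow> real^'m \<Rightarrow> (real^'m \<Rightarrow> real^'m)" where
  "hess F x = (SOME H. (grad F has_derivative H) (at x))"

definition sparse :: "nat \<Rightarrow> (real^'m::finite) set" where
  "sparse s = {v. card (supp v) \<le> s}"

definition proj_sparse :: "nat \<Rightarrow> real^'m::finite \<Rightarrow> (real^'m) set" where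
  "proj_sparse s w = {u \<in> sparse s. \<forall>u' \<in> sparse s. norm (w - u) \<le> norm (w - u')}"

definition Sigma_set :: "nat \<Rightarrow> nat \<Rightarrow> (real^('p1::finite + 'p2::finite)) set" where
  "Sigma_set s1 s2 = {bt. blk1 bt \<in> sparse s1 \<and> blk2 bt \<in> sparse s2}"

definition gpna_step :: "(real^('p1::finite + 'p2::finite) \<Rightarrow> real) \<Rightarrow> nat \<Rightarrow> nat
     \<Rightarrow> real \<Rightarrow> real \<Rightarrow> real \<Rightarrow> real
     \<Rightarrow> real^('p1 + 'p2) \<Rightarrow> real^('p1 + 'p2) \<Rightarrow> bool" where
  "gpna_step F s1 s2 \<sigma> \<epsilon> \<alpha>0 \<gamma> bk bk' \<longleftrightarrow>
     (\<exists>sel :: real \<Rightarrow> real^('p1 + 'p2).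
        (\<forall>\<alpha>>0. blk1 (sel \<alpha>) \<in> proj_sparse s1 (blk1 bk - \<alpha> *\<^sub>R blk1 (grad F bk))
              \<and> blk2 (sel \<alpha>) \<in> proj_sparse s2 (blk2 bk - \<alpha> *\<^sub>R blk2 (grad F bk))) \<and>
        (let desc = (\<lambda>w. F w \<le> F bk - (\<sigma>/2) * (norm (w - bk))^2) in
         (\<exists>q::nat. desc (sel (\<alpha>0 * \<gamma>^q))) \<and>
         (let qk = (LEAST q::nat. desc (sel (\<alpha>0 * \<gamma>^q)));
              u = sel (\<alpha>0 * \<gamma>^qk);
              \<Gamma> = supp u;
              H = hess F u;
              g = grad F u;
              C1 = (supp (blk1 bk) = supp (blk1 u) \<and> supp (blk2 bk) = supp (blk2 u));
              C2 = (norm (blk1 g) < \<epsilon> \<and> supp (blk2 bk) = supp (blk2 u));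
              C3 = (norm (blk2 g) < \<epsilon> \<and> supp (blk1 bk) = supp (blk1 u));
              C4 = (norm (blk1 g) < \<epsilon> \<and> norm (blk2 g) < \<epsilon>);
              newton = (\<lambda>v. (\<forall>i\<in>\<Gamma>. H (v - u) $ i = - (g $ i)) \<and> (\<forall>i. i \<notin> \<Gamma> \<longrightarrow> v $ i = 0));
              good = (\<lambda>v. newton v \<and> F v \<le> F u - (\<sigma>/2) * (norm (v - u))^2)
          in if (C1 \<or> C2 \<or> C3 \<or> C4) \<and> (\<exists>v. good v) then good bk' else bk' = u)))"

(* eigenvalues of the principal submatrix M_TT (vectors supported on T) *)
definition eigvals_on :: "real^'m^'m \<Rightarrow> 'm::finite set \<Rightarrow> real set" where
  "eigvals_on M T = {lam. \<exists>x. x \<noteq> 0 \<and> (\<forall>i. i \<notin> T \<longrightarrow> x $ i = 0)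
                           \<and> (\<forall>i\<in>T. (M *v x) $ i = lam * x $ i)}"

definition lam_max :: "real^'m^'m \<Rightarrow> real" where
  "lam_max M = Max (eigvals_on M (UNIV :: 'm::finite set))"

definition lam_min_sub :: "real^'m^'m \<Rightarrow> 'm::finite set \<Rightarrow> real" where
  "lam_min_sub M T = Min (eigvals_on M T)"

definition blockmat :: "real^'p1^'p1 \<Rightarrow> real^'p2^'p1 \<Rightarrow> real^'p1^'p2 \<Rightarrow> real^'p2^'p2
                          \<Rightarrow> real^('p1::finite + 'p2::finite)^('p1 + 'p2)" where
  "blockmat A B C D = (\<chi> r c. (case r of
        Inl i \<Rightarrow> (case c of Inl j \<Rightarrow> A $ i $ j | Inr j \<Rightarrow> B $ i $ j)
      | Inr i \<Rightarrow> (case c of Inl j \<Rightarrow> C $ i $ j | Inr j \<Rightarrow> D $ i $ j)))"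

definition hcat :: "real^'p1^'n \<Rightarrow> real^'p2^'n \<Rightarrow> real^('p1::finite + 'p2::finite)^'n::finite" where
  "hcat X Z = (\<chi> i c. (case c of Inl j \<Rightarrow> X $ i $ j | Inr j \<Rightarrow> Z $ i $ j))"

definition s_regular :: "real^'m^'n \<Rightarrow> nat \<Rightarrow> bool" where
  "s_regular A s \<longleftrightarrow> (\<forall>T :: 'm::finite set. card T = s \<longrightarrow>
       (\<forall>w. (\<forall>j. j \<notin> T \<longrightarrow> w $ j = 0) \<and> A *v w = 0 \<longrightarrow> w = 0))"

definition Qmat :: "loss \<Rightarrow> real^'p1^'n \<Rightarrow> real^'p2^'n \<Rightarrow> real \<Rightarrow> real \<Rightarrow> real
                      \<Rightarrow> real^('p1::finite + 'p2::finite)^('p1 + 'p2)" where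
  "Qmat L X Z a b c =
     (let ka = (case L of Lin \<Rightarrow> a | Log \<Rightarrow> a/4); kb = (case L of Lin \<Rightarrow> b | Log \<Rightarrow> b/4) in
      (1 / real CARD('n::finite)) *\<^sub>R
        blockmat ((ka + c) *\<^sub>R (transpose X ** X)) ((- c) *\<^sub>R (transpose X ** Z))
                 ((- c) *\<^sub>R (transpose Z ** X)) ((kb + c) *\<^sub>R (transpose Z ** Z)))"

definition Lf :: "loss \<Rightarrow> real^'p1^'n \<Rightarrow> real^'p2^'n \<Rightarrow> real \<Rightarrow> real \<Rightarrow> real \<Rightarrow> real" where
  "Lf L X Z a b c = lam_max (Qmat L X Z a b c :: real^('p1::finite + 'p2::finite)^('p1 + 'p2))
     " 

definition lmat :: "loss \<Rightarrow> real^'p1^'n \<Rightarrow> real^'p2^'n \<Rightarrow> real \<Rightarrow> real \<Rightarrow> real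
                      \<Rightarrow> real^('p1::finite + 'p2::finite)^('p1 + 'p2)" where
  "lmat L X Z a b c = (case L of
       Lin \<Rightarrow> Qmat Lin X Z a b c
     | Log \<Rightarrow> (c / real CARD('n::finite)) *\<^sub>R
               blockmat (transpose X ** X) (- (transpose X ** Z))
                        (- (transpose Z ** X)) (transpose Z ** Z))"

definition lf :: "loss \<Rightarrow> real^'p1^'n \<Rightarrow> real^'p2^'n \<Rightarrow> real \<Rightarrow> real \<Rightarrow> real \<Rightarrow> nat \<Rightarrow> real" where
  "lf L X Z a b c s =
     Min {lam_min_sub (lmat L X Z a b c :: real^('p1::finite + 'p2::finite)^('p1 + 'p2)) T
          | T. T \<noteq> {} \<and> card T \<le> s}"

definition l1norm :: "real^'m::finite \<Rightarrow> real" where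
  "l1norm v = (\<Sum>j\<in>UNIV. \<bar>v $ j\<bar>)"

definition Cf :: "real^'p1^'n \<Rightarrow> real^'p2^'n \<Rightarrow> real \<Rightarrow> real \<Rightarrow> real" where
  "Cf X Z a b = (3 * sqrt 2 / real CARD('n::finite)) *
      max (a * Max (range (\<lambda>i. l1norm (X $ i))) * lam_max (transpose X ** X :: real^'p1::finite^'p1))
          (b * Max (range (\<lambda>i. l1norm (Z $ i))) * lam_max (transpose Z ** Z :: real^'p2::finite^'p2))"

end

theory Submission
  imports Defs
begin


lemma sum_UNIV_sum:
  fixes f :: "('a::finite + 'b::finite) \<Rightarrow> 'c::comm_monoid_add"
  shows "(\<Sum>k\<in>UNIV. f k) = (\<Sum>i\<in>UNIV. f (Inl i)) + (\<Sum>j\<in>UNIV. f (Inr j))"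
proof -
  have "(UNIV :: ('a+'b) set) = range Inl \<union> range Inr" by (auto intro: sum.exhaust_sel) 
  then have "(\<Sum>k\<in>UNIV. f k) = sum f (range Inl \<union> range Inr)" by simp
  also have "\<dots> = sum f (range Inl) + sum f (range Inr)"
    by (rule sum.union_disjoint) auto
  also have "\<dots> = (\<Sum>i\<in>UNIV. f (Inl i)) + (\<Sum>j\<in>UNIV. f (Inr j))"
    by (simp add: sum.reindex)
  finally show ?thesis .
qed

lemma inner_split:
  fixes x y :: "real^('p1::finite + 'p2::finite)"
  shows "x \<bullet> y = blk1 x \<bullet> blk1 y + blk2 x \<bullet> blk2 y"
  by (simp add: inner_vec_def blk1_def blk2_def sum_UNIV_sum)

lemma norm2_split:
  fixes x :: "real^('p1::finite + 'p2::finite)"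
  shows "(norm x)^2 = (norm (blk1 x))^2 + (norm (blk2 x))^2"
  by (simp add: power2_norm_eq_inner inner_split)

lemma blk1_diff[simp]: "blk1 (x - y) = blk1 x - blk1 y" and blk2_diff[simp]: "blk2 (x - y) = blk2 x - blk2 y"
  and blk1_add[simp]: "blk1 (x + y) = blk1 x + blk1 y" and blk2_add[simp]: "blk2 (x + y) = blk2 x + blk2 y"
  and blk1_scale[simp]: "blk1 (r *\<^sub>R x) = r *\<^sub>R blk1 x" and blk2_scale[simp]: "blk2 (r *\<^sub>R x) = r *\<^sub>R blk2 x"
  and blk1_0[simp]: "blk1 0 = 0" and blk2_0[simp]: "blk2 0 = 0"
  by (simp_all add: blk1_def blk2_def vec_eq_iff)

lemma blk1_nth[simp]: "blk1 x $ i = x $ Inl i" and blk2_nth[simp]: "blk2 x $ j = x $ Inr j"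
  by (simp_all add: blk1_def blk2_def)

lemma supp_card_split:
  fixes x :: "real^('p1::finite + 'p2::finite)"
  shows "card (supp x) = card (supp (blk1 x)) + card (supp (blk2 x))"
proof -
  have "supp x = Inl ` supp (blk1 x) \<union> Inr ` supp (blk2 x)"
  proof (rule set_eqI)
    fix k show "k \<in> supp x \<longleftrightarrow> k \<in> Inl ` supp (blk1 x) \<union> Inr ` supp (blk2 x)"
      by (cases k) (auto simp: supp_def)
  qed
  then show ?thesis
    using card_Un_disjoint[of "Inl ` supp (blk1 x)" "Inr ` supp (blk2 x)"] by (auto simp: card_image)
qed

lemma norm_le_componentwise:
  fixes x y :: "real^'m::finite"
  assumes "\<And>i. \<bar>x $ i\<bar> \<le> \<bar>y $ i\<bar>"
  shows "norm x \<le> norm y"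
proof -
  have "(\<Sum>i\<in>UNIV. (x$i)^2) \<le> (\<Sum>i\<in>UNIV. (y$i)^2)"
    by (rule sum_mono) (use assms in \<open>simp add: abs_le_square_iff\<close>)
  then show ?thesis by (simp add: norm_vec_def L2_set_def real_sqrt_le_iff power2_norm_eq_inner)
qed

definition upd :: "real^'m \<Rightarrow> 'm::finite \<Rightarrow> real \<Rightarrow> real^'m" where
  "upd u i r = (\<chi> k. if k = i then r else u $ k)"

lemma norm2_vec: "(norm (x::real^'m::finite))^2 = (\<Sum>k\<in>UNIV. (x$k)^2)"
  by (simp only: power2_norm_eq_inner) (simp add: inner_vec_def power2_eq_square)

lemma upd_nth: "upd u i r $ k = (if k = i then r else u $ k)"
  by (simp add: upd_def)

lemma norm2_upd_diff:
  fixes w u :: "real^'m::finite"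
  shows "(norm (w - upd u i r))^2 = (norm (w - u))^2 - (w$i - u$i)^2 + (w$i - r)^2"
proof -
  have "(\<Sum>k\<in>UNIV. ((w - upd u i r)$k)^2) = (\<Sum>k\<in>UNIV. ((w - u)$k)^2) - (w$i - u$i)^2 + (w$i - r)^2"
  proof -
    have A: "(\<Sum>k\<in>UNIV. ((w - upd u i r)$k)^2) = (w$i - r)^2 + (\<Sum>k\<in>UNIV-{i}. ((w - u)$k)^2)"
      by (subst sum.remove[of _ i]) (auto simp: upd_def intro!: sum.cong)
    have B: "(\<Sum>k\<in>UNIV. ((w - u)$k)^2) = (w$i - u$i)^2 + (\<Sum>k\<in>UNIV-{i}. ((w - u)$k)^2)"
      by (subst sum.remove[of _ i]) auto
    show ?thesis using A B by simp
  qed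
  then show ?thesis by (simp add: norm2_vec)
qed

lemma supp_upd: "supp (upd u i r) = (if r = 0 then supp u - {i} else insert i (supp u))"
  by (auto simp: supp_def upd_def)

lemma proj_P1:
  assumes u: "u \<in> proj_sparse s w" and i: "i \<in> supp u"
  shows "u $ i = w $ i"
proof (rule ccontr)
  assume ne: "u $ i \<noteq> w $ i"
  have "supp (upd u i (w$i)) \<subseteq> supp u" using i by (auto simp: supp_upd)
  then have "card (supp (upd u i (w$i))) \<le> card (supp u)" by (simp add: card_mono)
  with u have "upd u i (w$i) \<in> sparse s" by (auto simp: proj_sparse_def sparse_def)
  with u have "norm (w - u) \<le> norm (w - upd u i (w$i))" by (auto simp: proj_sparse_def)
  then have "(norm (w - u))^2 \<le> (norm (w - upd u i (w$i)))^2" by (simp add: power_mono)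
  then have "(w$i - u$i)^2 \<le> 0" by (simp add: norm2_upd_diff)
  with ne show False by simp
qed

lemma proj_P3:
  assumes u: "u \<in> proj_sparse s w" and i: "i \<notin> supp u" and m: "m \<in> supp u"
  shows "\<bar>w $ i\<bar> \<le> \<bar>w $ m\<bar>"
proof (rule ccontr)
  assume lt: "\<not> ?thesis"
  define u' where "u' = upd (upd u m 0) i (w$i)"
  have im: "i \<noteq> m" using i m by auto
  have "supp u' \<subseteq> insert i (supp u - {m})" by (auto simp: u'_def supp_upd)
  then have "card (supp u') \<le> card (insert i (supp u - {m}))" by (simp add: card_mono)
  also have "\<dots> = card (supp u)"
  proof -
    have "card (supp u) > 0" using m by (auto simp: card_gt_0_iff)
    then show ?thesis using i m by (simp add: card_insert_if)
  qed
  finally have "u' \<in> sparse s" using u by (auto simp: proj_sparse_def sparse_def)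
  with u have "norm (w - u) \<le> norm (w - u')" by (auto simp: proj_sparse_def)
  then have le: "(norm (w - u))^2 \<le> (norm (w - u'))^2" by (simp add: power_mono)
  have um: "u $ m = w $ m" using proj_P1[OF u m] .
  have ui: "u $ i = 0" using i by (simp add: supp_def)
  have e1: "(norm (w - upd u m 0))^2 = (norm (w - u))^2 + (w$m)^2"
    using norm2_upd_diff[of w u m 0] um by simp
  have "(norm (w - u'))^2 = (norm (w - upd u m 0))^2 - (w$i)^2"
    unfolding u'_def using norm2_upd_diff[of w "upd u m 0" i "w$i"] im ui by (simp add: upd_nth)
  then have "(norm (w - u'))^2 = (norm (w - u))^2 + (w$m)^2 - (w$i)^2" using e1 by simp
  then have "(w$i)^2 \<le> (w$m)^2" using le by linarith
  then have "\<bar>w$i\<bar> \<le> \<bar>w$m\<bar>" by (simp only: abs_le_square_iff)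
  with lt show False by simp
qed

lemma proj_P2:
  assumes u: "u \<in> proj_sparse s w" and i: "i \<notin> supp u" and c: "card (supp u) < s"
  shows "w $ i = 0"
proof (rule ccontr)
  assume ne: "w $ i \<noteq> 0"
  have "card (supp (upd u i (w$i))) \<le> Suc (card (supp u))"
    by (auto simp: supp_upd card_insert_if)
  with c have "upd u i (w$i) \<in> sparse s" by (simp add: sparse_def)
  with u have "norm (w - u) \<le> norm (w - upd u i (w$i))" by (auto simp: proj_sparse_def)
  then have "(norm (w - u))^2 \<le> (norm (w - upd u i (w$i)))^2" by (simp add: power_mono)
  moreover have "u $ i = 0" using i by (simp add: supp_def)
  ultimately have "(w$i)^2 \<le> 0" by (simp add: norm2_upd_diff)
  with ne show False by simp
qed

lemma proj_descent:
  assumes u: "u \<in> proj_sparse s (b - \<alpha> *\<^sub>R g)" and b: "b \<in> sparse s" and a: "\<alpha> > 0"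
  shows "g \<bullet> (u - b) \<le> - ((norm (u - b))^2 / (2*\<alpha>))"
proof -
  from u b have "norm ((b - \<alpha> *\<^sub>R g) - u) \<le> norm ((b - \<alpha> *\<^sub>R g) - b)" by (auto simp: proj_sparse_def)
  then have "(norm ((b - \<alpha> *\<^sub>R g) - u))^2 \<le> (norm (\<alpha> *\<^sub>R g))^2" by (simp add: power_mono)
  moreover have "(norm ((b - \<alpha> *\<^sub>R g) - u))^2 = (norm (u - b))^2 + 2 * \<alpha> * (g \<bullet> (u - b)) + (norm (\<alpha> *\<^sub>R g))^2"
    unfolding power2_norm_eq_inner by (simp add: inner_diff_left inner_diff_right inner_commute right_diff_distrib)
  ultimately have "(norm (u - b))^2 + 2 * \<alpha> * (g \<bullet> (u - b)) \<le> 0" by linarith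
  with a show ?thesis by (simp add: field_simps)
qed


definition symm :: "real^'m^'m \<Rightarrow> bool" where "symm M \<longleftrightarrow> transpose M = M"

lemma symm_swap:
  fixes M :: "real^'m::finite^'m"
  assumes "symm M" shows "x \<bullet> (M *v y) = y \<bullet> (M *v x)"
proof -
  have "x \<bullet> (M *v y) = (x v* M) \<bullet> y" by (simp add: dot_lmul_matrix)
  also have "x v* M = transpose M *v x" by simp
  also have "\<dots> = M *v x" using assms by (simp add: symm_def)
  finally show ?thesis by (simp add: inner_commute)
qed

lemma inner_supp_T:
  fixes x y :: "real^'m::finite"
  assumes "\<forall>i. i \<notin> T \<longrightarrow> x $ i = 0"
  shows "x \<bullet> y = (\<Sum>i\<in>T. x $ i * y $ i)"
proof -
  have "x \<bullet> y = (\<Sum>i\<in>UNIV. x $ i * y $ i)" by (simp add: inner_vec_def)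
  also have "\<dots> = (\<Sum>i\<in>T. x $ i * y $ i)"
    by (rule sum.mono_neutral_right) (use assms in auto)
  finally show ?thesis .
qed

lemma eig_qf:
  fixes M :: "real^'m::finite^'m"
  assumes "\<forall>i. i \<notin> T \<longrightarrow> x $ i = 0" "\<forall>i\<in>T. (M *v x) $ i = lam * x $ i"
  shows "x \<bullet> (M *v y) = x \<bullet> (M *v y)" and "x \<bullet> (M *v x) = lam * (norm x)^2"
proof -
  show "x \<bullet> (M *v y) = x \<bullet> (M *v y)" ..
  have "x \<bullet> (M *v x) = (\<Sum>i\<in>T. x $ i * (lam * x $ i))"
    using inner_supp_T[OF assms(1)] assms(2) by simp
  also have "\<dots> = lam * (\<Sum>i\<in>T. x $ i * x $ i)" by (simp add: sum_distrib_left algebra_simps)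
  also have "(\<Sum>i\<in>T. x $ i * x $ i) = x \<bullet> x" using inner_supp_T[OF assms(1)] by simp
  finally show "x \<bullet> (M *v x) = lam * (norm x)^2" by (simp add: power2_norm_eq_inner)
qed

lemma lin_quad_nonneg:
  fixes A B :: real
  assumes "\<And>t. A * t + B * t^2 \<ge> 0"
  shows "A = 0"
proof (rule ccontr)
  assume A: "A \<noteq> 0"
  define e where "e = 1 / (\<bar>B\<bar> + 1)"
  have e0: "e > 0" by (simp add: e_def add_pos_nonneg)
  have "B * e \<le> \<bar>B\<bar> * e" using e0 by (simp add: mult_right_mono)
  also have "\<bar>B\<bar> * e < 1" unfolding e_def by (simp add: field_simps)
  finally have Be: "B * e - 1 < 0" by simp
  have eq: "A * (- A * e) + B * (- A * e)^2 = (A^2 * e) * (B * e - 1)"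
    by (simp add: power2_eq_square algebra_simps)
  have "(A^2 * e) > 0" using A e0 by simp
  then have "(A^2 * e) * (B * e - 1) < 0" using Be by (simp add: mult_pos_neg)
  with assms[of "- A * e"] eq show False by simp
qed

lemma rayleigh_exists:
  fixes M :: "real^'m::finite^'m"
  assumes sym: "symm M" and T: "T \<noteq> {}"
  shows "\<exists>lam0. lam0 \<in> eigvals_on M T \<and>
           (\<forall>x. (\<forall>i. i \<notin> T \<longrightarrow> x $ i = 0) \<longrightarrow> x \<bullet> (M *v x) \<ge> lam0 * (norm x)^2)"
proof -
  define S where "S = sphere (0::real^'m) 1 \<inter> {x. \<forall>i. i \<notin> T \<longrightarrow> x $ i = 0}"
  have cl: "closed {x::real^'m. \<forall>i. i \<notin> T \<longrightarrow> x $ i = 0}"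
    by (intro closed_Collect_all closed_Collect_imp open_Collect_const closed_Collect_eq)
       (auto intro: continuous_intros)
  have "compact S" unfolding S_def using cl by (intro compact_Int_closed compact_sphere)
  obtain i0 where i0: "i0 \<in> T" using T by auto
  have "axis i0 1 \<in> S" using i0 by (auto simp: S_def) (auto simp: axis_def)
  then have "S \<noteq> {}" by auto
  have "continuous_on S (\<lambda>x. x \<bullet> (M *v x))" by (intro continuous_intros)
  then obtain x0 where x0S: "x0 \<in> S" and x0min: "\<forall>y\<in>S. x0 \<bullet> (M *v x0) \<le> y \<bullet> (M *v y)"
    using continuous_attains_inf[OF \<open>compact S\<close> \<open>S \<noteq> {}\<close>] by blast
  define lam0 where "lam0 = x0 \<bullet> (M *v x0)"
  have nx0: "norm x0 = 1" and x0T: "\<forall>i. i \<notin> T \<longrightarrow> x0 $ i = 0" using x0S by (auto simp: S_def)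
  have ray: "x \<bullet> (M *v x) \<ge> lam0 * (norm x)^2" if xT: "\<forall>i. i \<notin> T \<longrightarrow> x $ i = 0" for x
  proof (cases "x = 0")
    case True then show ?thesis by simp
  next
    case False
    define y where "y = (1 / norm x) *\<^sub>R x"
    have "y \<in> S" using False xT by (auto simp: S_def y_def)
    then have "lam0 \<le> y \<bullet> (M *v y)" using x0min by (simp add: lam0_def)
    also have "y \<bullet> (M *v y) = (x \<bullet> (M *v x)) / (norm x)^2"
      by (simp add: y_def matrix_vector_mult_scaleR power2_eq_square)
    finally show ?thesis using False by (simp add: field_simps)
  qed
  define r where "r = M *v x0 - lam0 *\<^sub>R x0"
  define d where "d = (\<chi> i. if i \<in> T then r $ i else 0)"
  have dT: "\<forall>i. i \<notin> T \<longrightarrow> d $ i = 0" by (simp add: d_def)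
  have key: "(2 * (d \<bullet> r)) * t + (d \<bullet> (M *v d) - lam0 * (norm d)^2) * t^2 \<ge> 0" for t
  proof -
    have zT: "\<forall>i. i \<notin> T \<longrightarrow> (x0 + t *\<^sub>R d) $ i = 0" using x0T dT by simp
    have "(x0 + t *\<^sub>R d) \<bullet> (M *v (x0 + t *\<^sub>R d)) \<ge> lam0 * (norm (x0 + t *\<^sub>R d))^2"
      using ray[OF zT] .
    moreover have "(x0 + t *\<^sub>R d) \<bullet> (M *v (x0 + t *\<^sub>R d))
        = lam0 + 2 * t * (d \<bullet> (M *v x0)) + t^2 * (d \<bullet> (M *v d))"
      using symm_swap[OF sym, of x0 d]
      by (simp add: matrix_vector_right_distrib matrix_vector_mult_scaleR inner_add_left inner_add_right
             lam0_def power2_eq_square algebra_simps)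
    moreover have "(norm (x0 + t *\<^sub>R d))^2 = 1 + 2 * t * (d \<bullet> x0) + t^2 * (norm d)^2"
    proof -
      have "x0 \<bullet> x0 = 1" using nx0 power2_norm_eq_inner[of x0] by simp
      then show ?thesis unfolding power2_norm_eq_inner
        by (simp add: inner_add_left inner_add_right inner_commute power2_eq_square algebra_simps)
    qed
    ultimately have "0 \<le> 2 * t * (d \<bullet> (M *v x0) - lam0 * (d \<bullet> x0)) + t^2 * (d \<bullet> (M *v d) - lam0 * (norm d)^2)"
      by (simp add: algebra_simps)
    moreover have E: "d \<bullet> (M *v x0) - lam0 * (d \<bullet> x0) = d \<bullet> r" by (simp add: r_def inner_diff_right)
    ultimately show ?thesis by (simp only: E) (simp add: algebra_simps)
  qed
  have "2 * (d \<bullet> r) = 0" by (rule lin_quad_nonneg[OF key])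
  moreover have "d \<bullet> r = d \<bullet> d"
    using inner_supp_T[OF dT, of r] inner_supp_T[OF dT, of d] by (simp add: d_def)
  ultimately have "d = 0" by simp
  have eig: "\<forall>i\<in>T. (M *v x0) $ i = lam0 * x0 $ i"
  proof
    fix i assume iT: "i \<in> T"
    have "d $ i = 0" using \<open>d = 0\<close> by simp
    then have "r $ i = 0" using iT by (simp add: d_def)
    then show "(M *v x0) $ i = lam0 * x0 $ i" by (simp add: r_def)
  qed
  have "x0 \<noteq> 0" using nx0 by auto
  then have "lam0 \<in> eigvals_on M T" using x0T eig by (auto simp: eigvals_on_def)
  with ray show ?thesis by blast
qed

lemma eigvals_finite:
  fixes M :: "real^'m::finite^'m"
  assumes sym: "symm M"
  shows "finite (eigvals_on M T)"
proof -
  define E where "E = eigvals_on M T"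
  define e where "e lam = (SOME x. x \<noteq> 0 \<and> (\<forall>i. i \<notin> T \<longrightarrow> x $ i = 0) \<and> (\<forall>i\<in>T. (M *v x) $ i = lam * x $ i))" for lam
  have e: "e lam \<noteq> 0 \<and> (\<forall>i. i \<notin> T \<longrightarrow> e lam $ i = 0) \<and> (\<forall>i\<in>T. (M *v e lam) $ i = lam * e lam $ i)"
    if "lam \<in> E" for lam
  proof -
    from that have "\<exists>x. x \<noteq> 0 \<and> (\<forall>i. i \<notin> T \<longrightarrow> x $ i = 0) \<and> (\<forall>i\<in>T. (M *v x) $ i = lam * x $ i)"
      by (simp add: E_def eigvals_on_def)
    then show ?thesis unfolding e_def by (rule someI_ex)
  qed
  have inner_eq: "e lam \<bullet> (M *v e mu) = mu * (e lam \<bullet> e mu)" if "lam \<in> E" "mu \<in> E" for lam mu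
  proof -
    have "e lam \<bullet> (M *v e mu) = (\<Sum>i\<in>T. e lam $ i * (M *v e mu) $ i)"
      using inner_supp_T e[OF that(1)] by blast
    also have "\<dots> = (\<Sum>i\<in>T. e lam $ i * (mu * e mu $ i))" using e[OF that(2)] by simp
    also have "\<dots> = mu * (\<Sum>i\<in>T. e lam $ i * e mu $ i)" by (simp add: sum_distrib_left algebra_simps)
    also have "(\<Sum>i\<in>T. e lam $ i * e mu $ i) = e lam \<bullet> e mu"
      using inner_supp_T e[OF that(1)] by metis
    finally show ?thesis .
  qed
  have orth: "e lam \<bullet> e mu = 0" if "lam \<in> E" "mu \<in> E" "lam \<noteq> mu" for lam mu
  proof -
    have "mu * (e lam \<bullet> e mu) = lam * (e mu \<bullet> e lam)"
      using inner_eq[OF that(1,2)] inner_eq[OF that(2,1)] symm_swap[OF sym, of "e lam" "e mu"] by simp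
    then have "(mu - lam) * (e lam \<bullet> e mu) = 0" by (simp add: inner_commute algebra_simps)
    with that show ?thesis by simp
  qed
  have inj: "inj_on e E"
  proof (rule inj_onI)
    fix lam mu assume "lam \<in> E" "mu \<in> E" "e lam = e mu"
    then show "lam = mu" using orth[of lam mu] e[of lam] by (auto simp: inner_eq_zero_iff)
  qed
  have "pairwise orthogonal (e ` E)"
    unfolding pairwise_def orthogonal_def using orth by auto
  moreover have "0 \<notin> e ` E" using e by auto
  ultimately have "independent (e ` E)" by (rule pairwise_orthogonal_independent)
  then have "finite (e ` E)" using independent_bound by blast
  then show ?thesis using inj finite_imageD unfolding E_def by blast
qed

lemma rayleigh_min_sub:
  fixes M :: "real^'m::finite^'m"
  assumes sym: "symm M" and T: "T \<noteq> {}" and xT: "\<forall>i. i \<notin> T \<longrightarrow> x $ i = 0"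
  shows "x \<bullet> (M *v x) \<ge> lam_min_sub M T * (norm x)^2"
proof -
  obtain lam0 where l0: "lam0 \<in> eigvals_on M T"
    and ray: "\<forall>x. (\<forall>i. i \<notin> T \<longrightarrow> x $ i = 0) \<longrightarrow> x \<bullet> (M *v x) \<ge> lam0 * (norm x)^2"
    using rayleigh_exists[OF sym T] by (elim exE conjE) 
  have ge: "lam \<ge> lam0" if lam_in: "lam \<in> eigvals_on M T" for lam
  proof -
    obtain y where y: "y \<noteq> 0" "\<forall>i. i \<notin> T \<longrightarrow> y $ i = 0" "\<forall>i\<in>T. (M *v y) $ i = lam * y $ i"
      using lam_in unfolding eigvals_on_def mem_Collect_eq by (elim exE conjE) 
    have q1: "y \<bullet> (M *v y) = lam * (norm y)^2" using eig_qf(2)[OF y(2,3)] .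
    have q2: "y \<bullet> (M *v y) \<ge> lam0 * (norm y)^2" using ray y(2) by blast
    have "lam0 * (norm y)^2 \<le> lam * (norm y)^2" using q1 q2 by linarith
    moreover have "(norm y)^2 > 0" using y by simp
    ultimately show ?thesis by (rule mult_right_le_imp_le)
  qed
  have fin: "finite (eigvals_on M T)" by (rule eigvals_finite[OF sym])
  have "lam_min_sub M T = lam0"
    unfolding lam_min_sub_def
  proof (rule antisym)
    show "Min (eigvals_on M T) \<le> lam0" using fin l0 by (rule Min_le)
    show "lam0 \<le> Min (eigvals_on M T)" using fin l0 ge by (intro Min.boundedI) auto
  qed
  moreover have "x \<bullet> (M *v x) \<ge> lam0 * (norm x)^2" using ray xT by blast
  ultimately show ?thesis by simp
qed

lemma transpose_neg': "transpose (- M) = - transpose (M::real^'n::finite^'m::finite)"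
  by (simp add: transpose_def vec_eq_iff)

lemma symm_neg: "symm (M::real^'m::finite^'m) \<Longrightarrow> symm (- M)"
  by (simp add: symm_def transpose_neg')

lemma neg_mv: "(- M) *v x = - (M *v (x::real^'m::finite))"
  by (simp add: vec_eq_iff matrix_vector_mult_def sum_negf)

lemma rayleigh_max:
  fixes M :: "real^'m::finite^'m"
  assumes sym: "symm M"
  shows "x \<bullet> (M *v x) \<le> lam_max M * (norm x)^2"
proof -
  have ex: "\<exists>lam0. lam0 \<in> eigvals_on (- M) UNIV \<and> (\<forall>x. x \<bullet> ((- M) *v x) \<ge> lam0 * (norm x)^2)"
    using rayleigh_exists[OF symm_neg[OF sym], of UNIV] by simp
  then obtain lam0 where l0: "lam0 \<in> eigvals_on (- M) UNIV"
    and ray: "\<forall>x. x \<bullet> ((- M) *v x) \<ge> lam0 * (norm x)^2" by (elim exE conjE)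
  obtain x1 where x1: "x1 \<noteq> 0" "\<forall>i. ((- M) *v x1) $ i = lam0 * x1 $ i"
    using l0 unfolding eigvals_on_def mem_Collect_eq by (elim exE conjE) simp
  have "\<forall>i. (M *v x1) $ i = (- lam0) * x1 $ i"
  proof
    fix i show "(M *v x1) $ i = (- lam0) * x1 $ i" using x1(2)[rule_format, of i] by (simp add: neg_mv)
  qed
  then have inM: "- lam0 \<in> eigvals_on M UNIV" using x1(1) unfolding eigvals_on_def by auto
  have le: "lam \<le> - lam0" if lam_in: "lam \<in> eigvals_on M UNIV" for lam
  proof -
    obtain y where y: "y \<noteq> 0" "\<forall>i\<in>UNIV. (M *v y) $ i = lam * y $ i"
      using lam_in unfolding eigvals_on_def mem_Collect_eq by (elim exE conjE) simp
    have "y \<bullet> (M *v y) = lam * (norm y)^2" using eig_qf(2)[of UNIV y M lam] y by simp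
    moreover have "y \<bullet> ((- M) *v y) \<ge> lam0 * (norm y)^2" using ray by simp
    ultimately have "lam0 * (norm y)^2 \<le> (- lam) * (norm y)^2" by (simp add: neg_mv)
    moreover have "(norm y)^2 > 0" using y by simp
    ultimately have "lam0 \<le> - lam" by (rule mult_right_le_imp_le)
    then show ?thesis by simp
  qed
  have fin: "finite (eigvals_on M UNIV)" by (rule eigvals_finite[OF sym])
  have "lam_max M = - lam0"
    unfolding lam_max_def
  proof (rule antisym)
    show "- lam0 \<le> Max (eigvals_on M UNIV)" using fin inM by (rule Max_ge)
    show "Max (eigvals_on M UNIV) \<le> - lam0" using fin inM le by (intro Max.boundedI) auto
  qed
  then show ?thesis using ray[rule_format, of x] by (simp add: neg_mv)
qed



locale gpna_abs =
  fixes F :: "real^('p1::finite + 'p2::finite) \<Rightarrow> real"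
    and G :: "real^('p1 + 'p2) \<Rightarrow> real^('p1 + 'p2)"
    and Hf :: "real^('p1 + 'p2) \<Rightarrow> real^('p1 + 'p2) \<Rightarrow> real^('p1 + 'p2)"
    and s1 s2 :: nat and l Lam Lip :: real
  assumes dF: "\<And>x. (F has_derivative (\<lambda>h. G x \<bullet> h)) (at x)"
    and dG: "\<And>x. (G has_derivative Hf x) (at x)"
    and Hsym: "\<And>x d e. d \<bullet> Hf x e = e \<bullet> Hf x d"
    and Hlow: "\<And>x d. card (supp d) \<le> s1 + s2 \<Longrightarrow> d \<bullet> Hf x d \<ge> l * (norm d)^2"
    and Hup: "\<And>x d. norm (Hf x d) \<le> Lam * norm d"
    and Hlip: "\<And>x y d. norm (Hf x d - Hf y d) \<le> Lip * norm (x - y) * norm d"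
    and lpos: "l > 0"
begin

lemma Hlin: "linear (Hf x)"
  using dG[of x] by (simp add: has_derivative_def bounded_linear.linear)

lemma Hbl: "bounded_linear (Hf x)"
  using dG[of x] by (simp add: has_derivative_def)

lemma Hdiff: "Hf x (a - b) = Hf x a - Hf x b"
  using Hlin linear_diff by blast

lemma Lam_nonneg: "Lam \<ge> 0"
proof -
  define d :: "real^('p1+'p2)" where "d = axis undefined 1"
  have nd: "norm d = 1" by (simp add: d_def)
  have "norm (Hf 0 d) \<le> Lam * norm d" by (rule Hup)
  then have "0 \<le> Lam * norm d" using norm_ge_zero[of "Hf 0 d"] by linarith
  then show ?thesis using nd by simp
qed

lemma Lip_nonneg: "Lip \<ge> 0"
proof -
  define d :: "real^('p1+'p2)" where "d = axis undefined 1"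
  have nd: "norm d = 1" by (simp add: d_def)
  have "norm (Hf d d - Hf 0 d) \<le> Lip * norm (d - 0) * norm d" by (rule Hlip[where x=d and y=0 and d=d])
  then have "0 \<le> Lip * norm (d - 0) * norm d" using norm_ge_zero[of "Hf d d - Hf 0 d"] by linarith
  then show ?thesis using nd by simp
qed

lemma grad_eq: "grad F x = G x"
proof -
  have ex: "\<exists>g. (F has_derivative (\<lambda>h. g \<bullet> h)) (at x)" using dF by blast
  have d1: "(F has_derivative (\<lambda>h. grad F x \<bullet> h)) (at x)"
    unfolding grad_def by (rule someI_ex[OF ex])
  have "(\<lambda>h. grad F x \<bullet> h) = (\<lambda>h. G x \<bullet> h)" by (rule has_derivative_unique[OF d1 dF])
  then have "(grad F x - G x) \<bullet> (grad F x - G x) = 0"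
    by (simp add: fun_eq_iff inner_diff_left)
  then show ?thesis by simp
qed

lemma grad_fun: "grad F = G" using grad_eq by blast

lemma hess_eq: "hess F x = Hf x"
proof -
  have ex: "\<exists>H. (G has_derivative H) (at x)" using dG by blast
  have d1: "(G has_derivative hess F x) (at x)"
    unfolding hess_def grad_fun by (rule someI_ex[OF ex])
  show ?thesis by (rule has_derivative_unique[OF d1 dG])
qed

lemma G_lip: "norm (G x - G y) \<le> Lam * norm (x - y)"
proof -
  have "onorm (Hf z) \<le> Lam" for z by (rule onorm_le) (rule Hup)
  then show ?thesis
    by (intro differentiable_bound[where S=UNIV and f'=Hf]) (simp_all add: has_derivative_at_withinI dG)
qed

lemma seg: "t \<in> {0..1} \<Longrightarrow> x + t *\<^sub>R (y - x) \<in> closed_segment x y"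
  by (auto simp: closed_segment_def algebra_simps intro!: exI[of _ t])

lemma seg_dist: "(z::real^('p1+'p2)) \<in> closed_segment x y \<Longrightarrow> norm (z - x) \<le> norm (y - x)"
  using dist_in_closed_segment[of z x y] by (simp add: dist_norm norm_minus_commute)

lemma F_upper: "F y \<le> F x + G x \<bullet> (y - x) + Lam * (norm (y - x))^2"
proof -
  have B: "onorm ((\<lambda>h. G z \<bullet> h) - (\<lambda>h. G x \<bullet> h)) \<le> Lam * norm (y - x)" if "z \<in> closed_segment x y" for z
  proof (rule onorm_le)
    fix h
    have "norm (((\<lambda>h. G z \<bullet> h) - (\<lambda>h. G x \<bullet> h)) h) = \<bar>(G z - G x) \<bullet> h\<bar>" by (simp add: inner_diff_left)
    also have "\<dots> \<le> norm (G z - G x) * norm h" by (rule Cauchy_Schwarz_ineq2)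
    also have "\<dots> \<le> (Lam * norm (z - x)) * norm h" by (intro mult_right_mono G_lip) simp
    also have "\<dots> \<le> (Lam * norm (y - x)) * norm h"
      using seg_dist[OF that] Lam_nonneg by (intro mult_right_mono mult_left_mono) auto
    finally show "norm (((\<lambda>h. G z \<bullet> h) - (\<lambda>h. G x \<bullet> h)) h) \<le> Lam * norm (y - x) * norm h" .
  qed
  have "norm (F y - F x - G x \<bullet> (y - x)) \<le> norm (y - x) * (Lam * norm (y - x))"
    by (rule differentiable_bound_linearization[where S="closed_segment x y" and f'="\<lambda>z h. G z \<bullet> h"])
       (simp_all add: seg has_derivative_at_withinI dF B)
  then show ?thesis by (simp add: power2_eq_square algebra_simps abs_le_iff)
qed

lemma G_lin_err: "norm (G y - G x - Hf x (y - x)) \<le> Lip * (norm (y - x))^2"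
proof -
  have B: "onorm (Hf z - Hf x) \<le> Lip * norm (y - x)" if "z \<in> closed_segment x y" for z
  proof (rule onorm_le)
    fix h
    have "norm ((Hf z - Hf x) h) \<le> Lip * norm (z - x) * norm h" using Hlip[where x=z and y=x and d=h] by simp
    also have "\<dots> \<le> Lip * norm (y - x) * norm h"
      using seg_dist[OF that] Lip_nonneg by (intro mult_right_mono mult_left_mono) auto
    finally show "norm ((Hf z - Hf x) h) \<le> Lip * norm (y - x) * norm h" .
  qed
  have "norm (G y - G x - Hf x (y - x)) \<le> norm (y - x) * (Lip * norm (y - x))"
    by (rule differentiable_bound_linearization[where S="closed_segment x y" and f'=Hf])
       (simp_all add: seg has_derivative_at_withinI dG B)
  then show ?thesis by (simp add: power2_eq_square algebra_simps)
qed

lemma F_second: "F v \<le> F u + G u \<bullet> (v - u) + (1/2) * ((v - u) \<bullet> Hf u (v - u)) + Lip * (norm (v - u))^3"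
proof -
  define psi where "psi w = F w - (1/2) * ((w - u) \<bullet> Hf u (w - u))" for w
  have dpsi: "(psi has_derivative (\<lambda>h. (G w - Hf u (w - u)) \<bullet> h)) (at w)" for w
  proof -
    have d1: "((\<lambda>w. w - u) has_derivative (\<lambda>h. h)) (at w)"
      by (intro derivative_eq_intros) auto
    have d2: "((\<lambda>w. Hf u (w - u)) has_derivative (\<lambda>h. Hf u h)) (at w)"
      using bounded_linear.has_derivative[OF Hbl d1] .
    have d3: "((\<lambda>w. (w - u) \<bullet> Hf u (w - u)) has_derivative (\<lambda>h. (w - u) \<bullet> Hf u h + h \<bullet> Hf u (w - u))) (at w)"
      using has_derivative_inner[OF d1 d2] .
    have d4: "(psi has_derivative (\<lambda>h. G w \<bullet> h - (1/2) * ((w - u) \<bullet> Hf u h + h \<bullet> Hf u (w - u)))) (at w)"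
      unfolding psi_def by (intro has_derivative_diff dF has_derivative_mult_right d3)
    show ?thesis
    proof (rule has_derivative_eq_rhs[OF d4])
      show "(\<lambda>h. G w \<bullet> h - (1/2) * ((w - u) \<bullet> Hf u h + h \<bullet> Hf u (w - u))) = (\<lambda>h. (G w - Hf u (w - u)) \<bullet> h)"
      proof
        fix h
        have "(w - u) \<bullet> Hf u h = h \<bullet> Hf u (w - u)" by (rule Hsym)
        then show "G w \<bullet> h - (1/2) * ((w - u) \<bullet> Hf u h + h \<bullet> Hf u (w - u)) = (G w - Hf u (w - u)) \<bullet> h"
          by (simp add: inner_diff_left inner_diff_right inner_commute)
      qed
    qed
  qed
  have H0: "Hf u 0 = 0" using Hlin linear_0 by blast
  have B: "onorm ((\<lambda>h. (G z - Hf u (z - u)) \<bullet> h) - (\<lambda>h. (G u - Hf u (u - u)) \<bullet> h)) \<le> Lip * (norm (v - u))^2"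
    if "z \<in> closed_segment u v" for z
  proof (rule onorm_le)
    fix h
    have "norm (((\<lambda>h. (G z - Hf u (z - u)) \<bullet> h) - (\<lambda>h. (G u - Hf u (u - u)) \<bullet> h)) h)
        = \<bar>(G z - G u - Hf u (z - u)) \<bullet> h\<bar>" using H0 by (simp add: inner_diff_left)
    also have "\<dots> \<le> norm (G z - G u - Hf u (z - u)) * norm h" by (rule Cauchy_Schwarz_ineq2)
    also have "\<dots> \<le> (Lip * (norm (z - u))^2) * norm h" by (intro mult_right_mono G_lin_err) simp
    also have "\<dots> \<le> (Lip * (norm (v - u))^2) * norm h"
      using seg_dist[OF that] Lip_nonneg by (intro mult_right_mono mult_left_mono power_mono) auto
    finally show "norm (((\<lambda>h. (G z - Hf u (z - u)) \<bullet> h) - (\<lambda>h. (G u - Hf u (u - u)) \<bullet> h)) h) \<le> Lip * (norm (v - u))^2 * norm h" .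
  qed
  have "norm (psi v - psi u - (G u - Hf u (u - u)) \<bullet> (v - u)) \<le> norm (v - u) * (Lip * (norm (v - u))^2)"
    by (rule differentiable_bound_linearization[where S="closed_segment u v" and f'="\<lambda>w h. (G w - Hf u (w - u)) \<bullet> h"])
       (erule seg, rule has_derivative_at_withinI, rule dpsi, erule B, simp)
  then have "psi v - psi u - G u \<bullet> (v - u) \<le> Lip * (norm (v - u))^3"
    using H0 by (simp add: power3_eq_cube power2_eq_square algebra_simps abs_le_iff)
  then show ?thesis by (simp add: psi_def)
qed

lemma armijo_desc:
  assumes b: "b \<in> Sigma_set s1 s2" and a: "\<alpha> > 0" and sg: "\<sigma> > 0"
    and u1: "blk1 u \<in> proj_sparse s1 (blk1 b - \<alpha> *\<^sub>R blk1 (G b))"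
    and u2: "blk2 u \<in> proj_sparse s2 (blk2 b - \<alpha> *\<^sub>R blk2 (G b))"
    and asmall: "\<alpha> * (2 * Lam + \<sigma>) \<le> 1"
  shows "F u \<le> F b - (\<sigma>/2) * (norm (u - b))^2"
proof -
  have p1: "blk1 (G b) \<bullet> (blk1 u - blk1 b) \<le> - ((norm (blk1 u - blk1 b))^2 / (2*\<alpha>))"
    by (rule proj_descent[OF u1 _ a]) (use b in \<open>simp add: Sigma_set_def\<close>)
  have p2: "blk2 (G b) \<bullet> (blk2 u - blk2 b) \<le> - ((norm (blk2 u - blk2 b))^2 / (2*\<alpha>))"
    by (rule proj_descent[OF u2 _ a]) (use b in \<open>simp add: Sigma_set_def\<close>)
  have "G b \<bullet> (u - b) \<le> - ((norm (u - b))^2 / (2*\<alpha>))"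
    using p1 p2 inner_split[of "G b" "u - b"] norm2_split[of "u - b"] by (simp add: add_divide_distrib)
  then have "F u \<le> F b - ((norm (u - b))^2 / (2*\<alpha>)) + Lam * (norm (u - b))^2"
    using F_upper[of u b] by linarith
  moreover have "(\<sigma>/2) * (norm (u - b))^2 \<le> ((norm (u - b))^2 / (2*\<alpha>)) - Lam * (norm (u - b))^2"
  proof -
    have "\<sigma>/2 \<le> 1 / (2*\<alpha>) - Lam" using a asmall by (simp add: field_simps)
    then have "(\<sigma>/2) * (norm (u - b))^2 \<le> (1 / (2*\<alpha>) - Lam) * (norm (u - b))^2"
      by (rule mult_right_mono) simp
    then show ?thesis by (simp add: algebra_simps)
  qed
  ultimately show ?thesis by linarith
qed

definition newt :: "real^('p1+'p2) \<Rightarrow> real^('p1+'p2) \<Rightarrow> bool" where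
  "newt u v \<longleftrightarrow> (\<forall>i\<in>supp u. Hf u (v - u) $ i = - (G u $ i)) \<and> (\<forall>i. i \<notin> supp u \<longrightarrow> v $ i = 0)"

lemma supp_sub_card: "supp d \<subseteq> supp u \<Longrightarrow> card (supp u) \<le> s1 + s2 \<Longrightarrow> card (supp d) \<le> s1 + s2"
  by (meson card_mono finite le_trans)

lemma qf_zero:
  assumes "card (supp d) \<le> s1 + s2" "d \<bullet> Hf x d \<le> 0" shows "d = 0"
proof -
  have "l * (norm d)^2 \<le> 0" using Hlow[OF assms(1), of x] assms(2) by linarith
  then have "(norm d)^2 \<le> 0" using lpos by (simp add: mult_le_0_iff)
  then show ?thesis by simp
qed

lemma newt_unique:
  assumes v: "newt u v" and w: "newt u w" and c: "card (supp u) \<le> s1 + s2"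
  shows "v = w"
proof -
  define d where "d = v - w"
  have dz: "\<forall>i. i \<notin> supp u \<longrightarrow> d $ i = 0" using v w by (simp add: newt_def d_def)
  have "d = (v - u) - (w - u)" by (simp add: d_def)
  then have Hd: "Hf u d = Hf u (v - u) - Hf u (w - u)" by (simp add: Hdiff)
  have "\<forall>i\<in>supp u. Hf u d $ i = 0" using v w Hd by (simp add: newt_def)
  then have "d \<bullet> Hf u d = 0" using inner_supp_T[OF dz, of "Hf u d"] by simp
  moreover have "supp d \<subseteq> supp u" using dz by (auto simp: supp_def)
  ultimately have "d = 0" using qf_zero[of d u] supp_sub_card[OF _ c] by simp
  then show ?thesis by (simp add: d_def)
qed

lemma newt_exists:
  assumes c: "card (supp u) \<le> s1 + s2"
  shows "\<exists>v. newt u v"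
proof -
  define Ga where "Ga = supp u"
  define P where "P d = (\<chi> i. if i \<in> Ga then d $ i else 0)" for d :: "real^('p1+'p2)"
  define Phi where "Phi d = (\<chi> i. if i \<in> Ga then Hf u (P d) $ i else d $ i)" for d
  have linP: "linear P" unfolding P_def by (intro linearI) (simp_all add: vec_eq_iff)
  have linPhi: "linear Phi"
  proof (intro linearI)
    fix x y :: "real^('p1+'p2)" and r :: real
    have A: "P (x + y) = P x + P y" and B: "P (r *\<^sub>R x) = r *\<^sub>R P x"
      using linP by (simp_all add: linear_add linear_scale)
    have C: "Hf u (P x + P y) = Hf u (P x) + Hf u (P y)" and D: "Hf u (r *\<^sub>R P x) = r *\<^sub>R Hf u (P x)"
      using Hlin by (simp_all add: linear_add linear_scale)
    show "Phi (x + y) = Phi x + Phi y" unfolding Phi_def A C by (simp add: vec_eq_iff)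
    show "Phi (r *\<^sub>R x) = r *\<^sub>R Phi x" unfolding Phi_def B D by (simp add: vec_eq_iff)
  qed
  have inj: "inj Phi"
  proof -
    have "d = 0" if "Phi d = 0" for d
    proof -
      have off: "\<forall>i. i \<notin> Ga \<longrightarrow> d $ i = 0"
      proof (intro allI impI)
        fix i assume "i \<notin> Ga"
        then show "d $ i = 0" using arg_cong[OF that, of "\<lambda>z. z $ i"] by (simp add: Phi_def)
      qed
      then have Pd: "P d = d" by (auto simp: P_def vec_eq_iff)
      have on: "\<forall>i\<in>Ga. Hf u d $ i = 0"
      proof
        fix i assume "i \<in> Ga"
        then show "Hf u d $ i = 0" using arg_cong[OF that, of "\<lambda>z. z $ i"] Pd by (simp add: Phi_def)
      qed
      have "d \<bullet> Hf u d = 0" using inner_supp_T[OF off, of "Hf u d"] on by simp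
      moreover have "supp d \<subseteq> supp u" using off by (auto simp: supp_def Ga_def)
      ultimately show "d = 0" using qf_zero[of d u] supp_sub_card[OF _ c] by simp
    qed
    then show ?thesis using linPhi by (simp add: linear_injective_0)
  qed
  have "surj Phi" by (rule linear_injective_imp_surjective[OF linPhi inj]) simp
  then obtain e where e: "Phi e = (\<chi> i. if i \<in> Ga then - (G u $ i) else 0)" by (metis surjD)
  have eoff: "e $ i = 0" if "i \<notin> Ga" for i
    using arg_cong[OF e, of "\<lambda>z. z $ i"] that by (simp add: Phi_def)
  have Pe: "P e = e" using eoff by (auto simp: P_def vec_eq_iff)
  have eon: "Hf u e $ i = - (G u $ i)" if "i \<in> Ga" for i
    using arg_cong[OF e, of "\<lambda>z. z $ i"] that Pe by (simp add: Phi_def)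
  have "newt u (u + e)"
    unfolding newt_def using eon eoff by (auto simp: Ga_def supp_def)
  then show ?thesis by blast
qed

lemma newt_err:
  assumes v: "newt u v" and c: "card (supp u) \<le> s1 + s2"
    and bs: "\<forall>i. i \<notin> supp u \<longrightarrow> bs $ i = 0" and gs: "\<forall>i\<in>supp u. G bs $ i = 0"
  shows "l * norm (v - bs) \<le> Lip * (norm (u - bs))^2"
proof -
  define e where "e = v - bs"
  define q where "q = G bs - G u - Hf u (bs - u)"
  have eoff: "\<forall>i. i \<notin> supp u \<longrightarrow> e $ i = 0" using v bs by (simp add: newt_def e_def)
  have "e = (v - u) - (bs - u)" by (simp add: e_def)
  then have He: "Hf u e = Hf u (v - u) - Hf u (bs - u)" by (simp add: Hdiff)
  have on: "\<forall>i\<in>supp u. Hf u e $ i = q $ i" using v gs He by (simp add: newt_def q_def)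
  have "e \<bullet> Hf u e = (\<Sum>i\<in>supp u. e $ i * Hf u e $ i)" by (rule inner_supp_T[OF eoff])
  also have "\<dots> = (\<Sum>i\<in>supp u. e $ i * q $ i)" using on by simp
  also have "\<dots> = e \<bullet> q" by (rule inner_supp_T[OF eoff, symmetric])
  also have "\<dots> \<le> norm e * norm q" by (rule norm_cauchy_schwarz)
  also have "norm q \<le> Lip * (norm (bs - u))^2" unfolding q_def by (rule G_lin_err)
  finally have A: "e \<bullet> Hf u e \<le> norm e * (Lip * (norm (bs - u))^2)"
    by (simp add: mult_left_mono)
  have "supp e \<subseteq> supp u" using eoff by (auto simp: supp_def)
  then have "l * (norm e)^2 \<le> e \<bullet> Hf u e" using Hlow supp_sub_card[OF _ c] by blast
  with A have B: "l * (norm e)^2 \<le> norm e * (Lip * (norm (u - bs))^2)" by (simp add: norm_minus_commute)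
  show ?thesis
  proof (cases "e = 0")
    case True then show ?thesis using Lip_nonneg by (simp add: e_def)
  next
    case False
    then have "norm e > 0" by simp
    with B show ?thesis by (simp add: e_def power2_eq_square mult.assoc mult_le_cancel_left_pos)
  qed
qed

lemma newt_accept:
  assumes v: "newt u v" and c: "card (supp u) \<le> s1 + s2" and small: "Lip * norm (v - u) \<le> (l - \<sigma>)/2"
  shows "F v \<le> F u - (\<sigma>/2) * (norm (v - u))^2"
proof -
  define d where "d = v - u"
  have doff: "\<forall>i. i \<notin> supp u \<longrightarrow> d $ i = 0" using v by (simp add: newt_def d_def supp_def)
  have "G u \<bullet> d = d \<bullet> G u" by (simp add: inner_commute)
  also have "\<dots> = (\<Sum>i\<in>supp u. d $ i * G u $ i)" by (rule inner_supp_T[OF doff])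
  also have "\<dots> = (\<Sum>i\<in>supp u. - (d $ i * Hf u d $ i))" using v by (simp add: newt_def d_def)
  also have "\<dots> = - (d \<bullet> Hf u d)" by (simp add: inner_supp_T[OF doff] sum_negf)
  finally have gd: "G u \<bullet> d = - (d \<bullet> Hf u d)" .
  have "supp d \<subseteq> supp u" using doff by (auto simp: supp_def)
  then have low: "l * (norm d)^2 \<le> d \<bullet> Hf u d" using Hlow supp_sub_card[OF _ c] by blast
  have "F v \<le> F u - (1/2) * (d \<bullet> Hf u d) + Lip * (norm d)^3"
    using F_second[of v u] gd by (simp add: d_def)
  also have "Lip * (norm d)^3 = (Lip * norm d) * (norm d)^2" by (simp add: power3_eq_cube power2_eq_square)
  also have "\<dots> \<le> ((l - \<sigma>)/2) * (norm d)^2" using small by (intro mult_right_mono) (simp_all add: d_def)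
  finally have f1: "F v \<le> F u - (1/2) * (d \<bullet> Hf u d) + ((l - \<sigma>)/2) * (norm d)^2" by simp
  have f2: "((l - \<sigma>)/2) * (norm d)^2 = (l * (norm d)^2)/2 - (\<sigma>/2) * (norm d)^2" by (simp add: field_simps)
  have "F v \<le> F u - (\<sigma>/2) * (norm d)^2" using f1 f2 low by linarith
  then show ?thesis by (simp add: d_def)
qed

end


context gpna_abs begin

definition goodv :: "real \<Rightarrow> real^('p1+'p2) \<Rightarrow> real^('p1+'p2) \<Rightarrow> bool" where
  "goodv \<sigma> u v \<longleftrightarrow> newt u v \<and> F v \<le> F u - (\<sigma>/2) * (norm (v - u))^2"

definition Cnd :: "real \<Rightarrow> real^('p1+'p2) \<Rightarrow> real^('p1+'p2) \<Rightarrow> bool" where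
  "Cnd \<epsilon> b u \<longleftrightarrow>
     (supp (blk1 b) = supp (blk1 u) \<and> supp (blk2 b) = supp (blk2 u)) \<or>
     (norm (blk1 (G u)) < \<epsilon> \<and> supp (blk2 b) = supp (blk2 u)) \<or>
     (norm (blk2 (G u)) < \<epsilon> \<and> supp (blk1 b) = supp (blk1 u)) \<or>
     (norm (blk1 (G u)) < \<epsilon> \<and> norm (blk2 (G u)) < \<epsilon>)"

lemma step_unpack:
  assumes st: "gpna_step F s1 s2 \<sigma> \<epsilon> \<alpha>0 \<gamma> b b'" and bS: "b \<in> Sigma_set s1 s2"
    and sg: "\<sigma> > 0" and a0: "0 < \<alpha>0" "\<alpha>0 \<le> 1" and g: "0 < \<gamma>" "\<gamma> < 1"
  shows "\<exists>u \<alpha>. 0 < \<alpha> \<and> \<alpha> \<le> 1 \<and> min \<alpha>0 (\<gamma> / (2 * Lam + \<sigma>)) \<le> \<alpha> \<and>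
           blk1 u \<in> proj_sparse s1 (blk1 b - \<alpha> *\<^sub>R blk1 (G b)) \<and>
           blk2 u \<in> proj_sparse s2 (blk2 b - \<alpha> *\<^sub>R blk2 (G b)) \<and>
           F u \<le> F b - (\<sigma>/2) * (norm (u - b))^2 \<and>
           (Cnd \<epsilon> b u \<and> (\<exists>v. goodv \<sigma> u v) \<longrightarrow> goodv \<sigma> u b') \<and>
           (\<not> (Cnd \<epsilon> b u \<and> (\<exists>v. goodv \<sigma> u v)) \<longrightarrow> b' = u)"
proof -
  define desc where "desc = (\<lambda>w. F w \<le> F b - (\<sigma>/2) * (norm (w - b))^2)"
  from st obtain sel :: "real \<Rightarrow> real^('p1+'p2)" where
    proj: "\<forall>\<alpha>>0. blk1 (sel \<alpha>) \<in> proj_sparse s1 (blk1 b - \<alpha> *\<^sub>R blk1 (G b))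
              \<and> blk2 (sel \<alpha>) \<in> proj_sparse s2 (blk2 b - \<alpha> *\<^sub>R blk2 (G b))"
    and exq: "\<exists>q::nat. desc (sel (\<alpha>0 * \<gamma>^q))"
    and rest: "let qk = (LEAST q::nat. desc (sel (\<alpha>0 * \<gamma>^q))); u = sel (\<alpha>0 * \<gamma>^qk) in
       if Cnd \<epsilon> b u \<and> (\<exists>v. goodv \<sigma> u v) then goodv \<sigma> u b' else b' = u"
    unfolding gpna_step_def grad_fun hess_eq desc_def[symmetric] Let_def Cnd_def goodv_def newt_def
    by blast
  define qk where "qk = (LEAST q::nat. desc (sel (\<alpha>0 * \<gamma>^q)))"
  define \<alpha> where "\<alpha> = \<alpha>0 * \<gamma>^qk"
  define u where "u = sel \<alpha>"
  have du: "desc u" unfolding u_def \<alpha>_def qk_def by (rule LeastI_ex[OF exq])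
  have apos: "0 < \<alpha>" using a0 g by (simp add: \<alpha>_def)
  have ale: "\<alpha> \<le> 1"
  proof -
    have "\<gamma>^qk \<le> 1" using g by (simp add: power_le_one)
    then have "\<alpha>0 * \<gamma>^qk \<le> 1 * 1" using a0 g by (intro mult_mono) simp_all
    then show ?thesis by (simp add: \<alpha>_def)
  qed
  have Lp: "2 * Lam + \<sigma> > 0" using Lam_nonneg sg by simp
  have alow: "min \<alpha>0 (\<gamma> / (2 * Lam + \<sigma>)) \<le> \<alpha>"
  proof (cases qk)
    case 0 then show ?thesis by (simp add: \<alpha>_def)
  next
    case (Suc q')
    define \<alpha>' where "\<alpha>' = \<alpha>0 * \<gamma>^q'"
    have a'pos: "\<alpha>' > 0" using a0 g by (simp add: \<alpha>'_def)
    have nd: "\<not> desc (sel \<alpha>')"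
      unfolding \<alpha>'_def using not_less_Least[of q' "\<lambda>q. desc (sel (\<alpha>0 * \<gamma>^q))"] Suc by (simp add: qk_def)
    have "\<not> (\<alpha>' * (2 * Lam + \<sigma>) \<le> 1)"
    proof
      assume sm: "\<alpha>' * (2 * Lam + \<sigma>) \<le> 1"
      have "desc (sel \<alpha>')" unfolding desc_def
        using armijo_desc[OF bS a'pos sg _ _ sm] proj a'pos by blast
      with nd show False by simp
    qed
    then have "1 < \<alpha>' * (2 * Lam + \<sigma>)" by simp
    then have "\<gamma> * 1 < \<gamma> * (\<alpha>' * (2 * Lam + \<sigma>))" using g by (intro mult_strict_left_mono) simp_all
    then have "\<gamma> / (2 * Lam + \<sigma>) < \<gamma> * \<alpha>'" using Lp by (simp add: divide_less_eq mult.assoc)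
    also have "\<gamma> * \<alpha>' = \<alpha>" by (simp add: \<alpha>_def \<alpha>'_def Suc)
    finally show ?thesis by simp
  qed
  have pu: "blk1 u \<in> proj_sparse s1 (blk1 b - \<alpha> *\<^sub>R blk1 (G b)) \<and> blk2 u \<in> proj_sparse s2 (blk2 b - \<alpha> *\<^sub>R blk2 (G b))"
    using proj apos by (simp add: u_def)
  have r: "if Cnd \<epsilon> b u \<and> (\<exists>v. goodv \<sigma> u v) then goodv \<sigma> u b' else b' = u"
    using rest by (simp add: Let_def u_def \<alpha>_def qk_def)
  show ?thesis
    apply (rule exI[of _ u], rule exI[of _ \<alpha>])
    using apos ale alow pu du r by (simp add: desc_def split: if_splits)
qed

end

lemma lim_zero_cmp:
  fixes a b :: "nat \<Rightarrow> real"
  assumes "a \<longlonglongrightarrow> A" "b \<longlonglongrightarrow> 0" "eventually (\<lambda>k. norm (a k) \<le> norm (b k) * K) sequentially"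
  shows "A = 0"
proof -
  have "a \<longlonglongrightarrow> 0" by (rule tendsto_0_le[OF assms(2,3)])
  with assms(1) show ?thesis using LIMSEQ_unique by blast
qed

lemma block_analysis:
  fixes b u gk :: "nat \<Rightarrow> real^'q::finite" and A :: "nat \<Rightarrow> real"
  assumes proj: "\<And>k. u k \<in> proj_sparse sj (b k - A k *\<^sub>R gk k)"
    and bsp: "\<And>k. b k \<in> sparse sj"
    and lb: "b \<longlonglongrightarrow> bs" and lu: "u \<longlonglongrightarrow> bs" and lg: "gk \<longlonglongrightarrow> gs"
    and amin: "amin > 0" "\<And>k. amin \<le> A k"
  shows "eventually (\<lambda>k. supp bs \<subseteq> supp (b k) \<and> supp bs \<subseteq> supp (u k)) sequentially"
    and "card (supp bs) \<le> sj"
    and "\<forall>j\<in>supp bs. gs $ j = 0"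
    and "card (supp bs) < sj \<Longrightarrow> gs = 0"
    and "card (supp bs) = sj \<Longrightarrow> eventually (\<lambda>k. supp (b k) = supp bs \<and> supp (u k) = supp bs) sequentially"
proof -
  have cb: "(\<lambda>k. b k $ j) \<longlonglongrightarrow> bs $ j" for j using lb by (rule tendsto_vec_nth)
  have cu: "(\<lambda>k. u k $ j) \<longlonglongrightarrow> bs $ j" for j using lu by (rule tendsto_vec_nth)
  have cg: "(\<lambda>k. gk k $ j) \<longlonglongrightarrow> gs $ j" for j using lg by (rule tendsto_vec_nth)
  have ev1: "eventually (\<lambda>k. b k $ j \<noteq> 0 \<and> u k $ j \<noteq> 0) sequentially" if "j \<in> supp bs" for j
  proof -
    have "bs $ j \<noteq> 0" using that by (simp add: supp_def)
    then show ?thesis using tendsto_imp_eventually_ne[OF cb] tendsto_imp_eventually_ne[OF cu]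
      by (simp add: eventually_conj)
  qed
  show E: "eventually (\<lambda>k. supp bs \<subseteq> supp (b k) \<and> supp bs \<subseteq> supp (u k)) sequentially"
  proof -
    have "eventually (\<lambda>k. \<forall>j\<in>supp bs. b k $ j \<noteq> 0 \<and> u k $ j \<noteq> 0) sequentially"
      using ev1 by (intro eventually_ball_finite) auto
    then show ?thesis by eventually_elim (auto simp: supp_def)
  qed
  then obtain k0 where k0: "supp bs \<subseteq> supp (b k0)" by (auto simp: eventually_sequentially)
  then have "card (supp bs) \<le> card (supp (b k0))" by (simp add: card_mono)
  also have "\<dots> \<le> sj" using bsp[of k0] by (simp add: sparse_def)
  finally show C0: "card (supp bs) \<le> sj" .
  have P1: "u k $ j = b k $ j - A k * gk k $ j" if "j \<in> supp (u k)" for k j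
    using proj_P1[OF proj that] by simp
  have Apos: "A k > 0" for k using amin(1) amin(2)[of k] by linarith
  have bound: "norm (gk k $ j) \<le> norm (b k $ j - u k $ j) * (1 / amin)" if "j \<in> supp (u k)" for k j
  proof -
    have "A k * gk k $ j = b k $ j - u k $ j" using P1[OF that] by simp
    then have "\<bar>A k * gk k $ j\<bar> = \<bar>b k $ j - u k $ j\<bar>" by simp
    then have "A k * \<bar>gk k $ j\<bar> = \<bar>b k $ j - u k $ j\<bar>" using Apos[of k] by (simp add: abs_mult)
    moreover have "amin * \<bar>gk k $ j\<bar> \<le> A k * \<bar>gk k $ j\<bar>" using amin(2)[of k] by (simp add: mult_right_mono)
    ultimately have "amin * \<bar>gk k $ j\<bar> \<le> \<bar>b k $ j - u k $ j\<bar>" by simp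
    then show ?thesis using amin(1) by (simp add: field_simps)
  qed
  have bmu: "(\<lambda>k. b k $ j - u k $ j) \<longlonglongrightarrow> 0" for j
    using tendsto_diff[OF cb[of j] cu[of j]] by simp
  show C1: "\<forall>j\<in>supp bs. gs $ j = 0"
  proof
    fix j assume j: "j \<in> supp bs"
    have "eventually (\<lambda>k. j \<in> supp (u k)) sequentially"
      using ev1[OF j] by eventually_elim (simp add: supp_def)
    then have "eventually (\<lambda>k. norm (gk k $ j) \<le> norm (b k $ j - u k $ j) * (1 / amin)) sequentially"
      by eventually_elim (rule bound)
    then show "gs $ j = 0" by (rule lim_zero_cmp[OF cg bmu])
  qed
  show "gs = 0" if lt: "card (supp bs) < sj"
  proof -
    have "gs $ j = 0" for j
    proof (cases "j \<in> supp bs")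
      case True then show ?thesis using C1 by blast
    next
      case False
      define ek where "ek k = (\<Sum>m\<in>UNIV - supp bs. \<bar>u k $ m\<bar>)" for k
      have "(\<lambda>k. (\<Sum>m\<in>UNIV - supp bs. \<bar>u k $ m\<bar>)) \<longlonglongrightarrow> (\<Sum>m\<in>UNIV - supp bs. \<bar>bs $ m\<bar>)"
        by (intro tendsto_sum tendsto_rabs cu)
      moreover have "(\<Sum>m\<in>UNIV - supp bs. \<bar>bs $ m\<bar>) = 0" by (simp add: supp_def)
      ultimately have ek0: "ek \<longlonglongrightarrow> 0" unfolding ek_def by simp
      have wle: "\<bar>b k $ j - A k * gk k $ j\<bar> \<le> ek k" for k
      proof -
        define w where "w = b k - A k *\<^sub>R gk k"
        have wj: "w $ j = b k $ j - A k * gk k $ j" by (simp add: w_def)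
        have tm: "\<bar>u k $ m\<bar> \<le> ek k" if "m \<notin> supp bs" for m
        proof -
          have "\<bar>u k $ m\<bar> = (\<Sum>m'\<in>{m}. \<bar>u k $ m'\<bar>)" by simp
          also have "\<dots> \<le> ek k" unfolding ek_def using that by (intro sum_mono2) simp_all
          finally show ?thesis .
        qed
        show ?thesis
        proof (cases "j \<in> supp (u k)")
          case True
          then show ?thesis using P1[OF True] tm[OF False] by simp
        next
          case notin: False
          show ?thesis
          proof (cases "card (supp (u k)) < sj")
            case True
            have "w $ j = 0" using proj_P2[OF proj[of k, folded w_def] notin True] .
            moreover have "ek k \<ge> 0" by (simp add: ek_def sum_nonneg)
            ultimately show ?thesis using wj by simp
          next
            case False
            then have "card (supp bs) < card (supp (u k))" using lt by linarith
            then have "\<not> supp (u k) \<subseteq> supp bs" using card_mono[of "supp bs" "supp (u k)"] by auto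
            then obtain m where m: "m \<in> supp (u k)" "m \<notin> supp bs" by blast
            have "\<bar>w $ j\<bar> \<le> \<bar>w $ m\<bar>" by (rule proj_P3[OF proj[of k, folded w_def] notin m(1)])
            also have "w $ m = u k $ m" using proj_P1[OF proj[of k, folded w_def] m(1)] by simp
            also have "\<bar>u k $ m\<bar> \<le> ek k" by (rule tm[OF m(2)])
            finally show ?thesis using wj by simp
          qed
        qed
      qed
      have bj0: "(\<lambda>k. b k $ j) \<longlonglongrightarrow> 0" using cb[of j] False by (simp add: supp_def)
      have s0: "(\<lambda>k. \<bar>b k $ j\<bar> + ek k) \<longlonglongrightarrow> 0"
        using tendsto_add[OF tendsto_rabs[OF bj0] ek0] by simp
      have "eventually (\<lambda>k. norm (gk k $ j) \<le> norm (\<bar>b k $ j\<bar> + ek k) * (1 / amin)) sequentially"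
      proof (rule always_eventually, rule allI)
        fix k
        have "A k * \<bar>gk k $ j\<bar> = \<bar>A k * gk k $ j\<bar>" using Apos[of k] by (simp add: abs_mult)
        also have "\<dots> \<le> \<bar>b k $ j\<bar> + \<bar>b k $ j - A k * gk k $ j\<bar>" by linarith
        also have "\<dots> \<le> \<bar>b k $ j\<bar> + ek k" using wle[of k] by simp
        finally have i1: "A k * \<bar>gk k $ j\<bar> \<le> \<bar>b k $ j\<bar> + ek k" .
        have "amin * \<bar>gk k $ j\<bar> \<le> A k * \<bar>gk k $ j\<bar>" using amin(2)[of k] by (simp add: mult_right_mono)
        with i1 have "amin * \<bar>gk k $ j\<bar> \<le> \<bar>b k $ j\<bar> + ek k" by simp
        moreover have "ek k \<ge> 0" by (simp add: ek_def sum_nonneg)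
        ultimately show "norm (gk k $ j) \<le> norm (\<bar>b k $ j\<bar> + ek k) * (1 / amin)"
          using amin(1) by (simp add: field_simps)
      qed
      then show ?thesis by (rule lim_zero_cmp[OF cg s0])
    qed
    then show ?thesis by (simp add: vec_eq_iff)
  qed
  show "eventually (\<lambda>k. supp (b k) = supp bs \<and> supp (u k) = supp bs) sequentially" if eq: "card (supp bs) = sj"
    using E
  proof eventually_elim
    case (elim k)
    have cbk: "card (supp (b k)) \<le> card (supp bs)" using bsp[of k] eq by (simp add: sparse_def)
    have cuk: "card (supp (u k)) \<le> card (supp bs)" using proj[of k] eq by (simp add: proj_sparse_def sparse_def)
    have "card (supp bs) \<le> card (supp (b k))" using elim by (intro card_mono) simp_all
    then have e1: "supp bs = supp (b k)" using elim cbk by (intro card_subset_eq) simp_all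
    have "card (supp bs) \<le> card (supp (u k))" using elim by (intro card_mono) simp_all
    then have e2: "supp bs = supp (u k)" using elim cuk by (intro card_subset_eq) simp_all
    show ?case using e1 e2 by simp
  qed
qed


lemma blk1_bl: "bounded_linear (blk1 :: real^('p1::finite+'p2::finite) \<Rightarrow> real^'p1)"
  by (rule linear_conv_bounded_linear[THEN iffD1]) (auto intro!: linearI simp: vec_eq_iff)
lemma blk2_bl: "bounded_linear (blk2 :: real^('p1::finite+'p2::finite) \<Rightarrow> real^'p2)"
  by (rule linear_conv_bounded_linear[THEN iffD1]) (auto intro!: linearI simp: vec_eq_iff)

lemma blk_tendsto:
  assumes "f \<longlonglongrightarrow> (x :: real^('p1::finite+'p2::finite))"
  shows "(\<lambda>k. blk1 (f k)) \<longlonglongrightarrow> blk1 x" "(\<lambda>k. blk2 (f k)) \<longlonglongrightarrow> blk2 x"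
  using bounded_linear.tendsto[OF blk1_bl assms] bounded_linear.tendsto[OF blk2_bl assms] by auto

lemma supp_blk1: "j \<in> supp (blk1 x) \<longleftrightarrow> Inl j \<in> supp x" and supp_blk2: "j \<in> supp (blk2 x) \<longleftrightarrow> Inr j \<in> supp x"
  by (simp_all add: supp_def)

context gpna_abs begin

lemma newt_sigma:
  assumes "newt u v" "blk1 u \<in> sparse s1" "blk2 u \<in> sparse s2"
  shows "v \<in> Sigma_set s1 s2"
proof -
  have z: "\<forall>i. i \<notin> supp u \<longrightarrow> v $ i = 0" using assms(1) by (simp add: newt_def)
  have "supp (blk1 v) \<subseteq> supp (blk1 u)" using z by (auto simp: supp_def)
  then have "card (supp (blk1 v)) \<le> card (supp (blk1 u))" by (simp add: card_mono)
  moreover have "supp (blk2 v) \<subseteq> supp (blk2 u)" using z by (auto simp: supp_def)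
  then have "card (supp (blk2 v)) \<le> card (supp (blk2 u))" by (simp add: card_mono)
  ultimately show ?thesis using assms(2,3) by (simp add: Sigma_set_def sparse_def)
qed

lemma proj_full_P1:
  assumes u1: "blk1 u \<in> proj_sparse s1 (blk1 b - \<alpha> *\<^sub>R blk1 g)"
    and u2: "blk2 u \<in> proj_sparse s2 (blk2 b - \<alpha> *\<^sub>R blk2 g)"
    and i: "i \<in> supp u"
  shows "u $ i = b $ i - \<alpha> * g $ i"
proof (cases i)
  case (Inl j)
  then have "j \<in> supp (blk1 u)" using i by (simp add: supp_def)
  from proj_P1[OF u1 this] show ?thesis using Inl by simp
next
  case (Inr j)
  then have "j \<in> supp (blk2 u)" using i by (simp add: supp_def)
  from proj_P1[OF u2 this] show ?thesis using Inr by simp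
qed

lemma proj_err:
  assumes P1: "\<And>i. i \<in> supp u \<Longrightarrow> u $ i = b $ i - \<alpha> * G b $ i"
    and bs: "\<forall>i. i \<notin> supp u \<longrightarrow> bs $ i = 0" and gs: "\<forall>i\<in>supp u. G bs $ i = 0"
    and a: "0 < \<alpha>" "\<alpha> \<le> 1"
  shows "norm (u - bs) \<le> (1 + Lam) * norm (b - bs)"
proof -
  have "\<bar>(u - bs) $ i\<bar> \<le> \<bar>((b - bs) - \<alpha> *\<^sub>R (G b - G bs)) $ i\<bar>" for i
  proof (cases "i \<in> supp u")
    case True
    then show ?thesis using P1[OF True] gs by (simp add: algebra_simps)
  next
    case False
    then have "u $ i = 0" by (simp add: supp_def)
    then show ?thesis using bs False by simp
  qed
  then have "norm (u - bs) \<le> norm ((b - bs) - \<alpha> *\<^sub>R (G b - G bs))" by (rule norm_le_componentwise)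
  also have "\<dots> \<le> norm (b - bs) + \<alpha> * norm (G b - G bs)" using a by (simp add: norm_triangle_ineq4[THEN order_trans])
  also have "\<alpha> * norm (G b - G bs) \<le> 1 * (Lam * norm (b - bs))"
    using a G_lip[of b bs] by (intro mult_mono) simp_all
  finally show ?thesis by (simp add: algebra_simps)
qed

theorem abs_main:
  fixes \<beta> :: "nat \<Rightarrow> real^('p1 + 'p2)"
  assumes sg: "0 < \<sigma>" "2 * \<sigma> < l"
    and params: "\<epsilon> > 0" "0 < \<alpha>0" "\<alpha>0 \<le> 1" "0 < \<gamma>" "\<gamma> < 1"
    and start: "\<beta> 0 \<in> Sigma_set s1 s2"
    and iter: "\<And>k. gpna_step F s1 s2 \<sigma> \<epsilon> \<alpha>0 \<gamma> (\<beta> k) (\<beta> (Suc k))"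
    and lim: "\<beta> \<longlonglongrightarrow> bs"
  shows "\<forall>\<^sub>F k in sequentially. norm (\<beta> (Suc k) - bs) \<le> (1 + Lam)^2 * Lip / l * (norm (\<beta> k - bs))^2"
proof -
  define amin where "amin = min \<alpha>0 (\<gamma> / (2 * Lam + \<sigma>))"
  have Lp: "2 * Lam + \<sigma> > 0" using Lam_nonneg sg by simp
  have amin_pos: "amin > 0" using params Lp by (simp add: amin_def)
  define P where "P k u \<alpha> \<longleftrightarrow> 0 < \<alpha> \<and> \<alpha> \<le> 1 \<and> amin \<le> \<alpha> \<and>
           blk1 u \<in> proj_sparse s1 (blk1 (\<beta> k) - \<alpha> *\<^sub>R blk1 (G (\<beta> k))) \<and>
           blk2 u \<in> proj_sparse s2 (blk2 (\<beta> k) - \<alpha> *\<^sub>R blk2 (G (\<beta> k))) \<and>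
           F u \<le> F (\<beta> k) - (\<sigma>/2) * (norm (u - \<beta> k))^2 \<and>
           (Cnd \<epsilon> (\<beta> k) u \<and> (\<exists>v. goodv \<sigma> u v) \<longrightarrow> goodv \<sigma> u (\<beta> (Suc k))) \<and>
           (\<not> (Cnd \<epsilon> (\<beta> k) u \<and> (\<exists>v. goodv \<sigma> u v)) \<longrightarrow> \<beta> (Suc k) = u)" for k u \<alpha>
  have sigma_all: "\<beta> k \<in> Sigma_set s1 s2 \<and> (\<exists>u \<alpha>. P k u \<alpha>)" for k
  proof (induction k)
    case 0
    show ?case using start step_unpack[OF iter start sg(1) params(2-5)] by (simp add: P_def amin_def)
  next
    case (Suc k)
    then obtain u \<alpha> where Pk: "P k u \<alpha>" by blast
    have us: "blk1 u \<in> sparse s1" "blk2 u \<in> sparse s2" using Pk by (auto simp: P_def proj_sparse_def)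
    have "\<beta> (Suc k) \<in> Sigma_set s1 s2"
    proof (cases "Cnd \<epsilon> (\<beta> k) u \<and> (\<exists>v. goodv \<sigma> u v)")
      case True
      then have "newt u (\<beta> (Suc k))" using Pk by (simp add: P_def goodv_def)
      then show ?thesis using newt_sigma us by blast
    next
      case False
      then have "\<beta> (Suc k) = u" using Pk by (simp add: P_def)
      then show ?thesis using us by (simp add: Sigma_set_def)
    qed
    then show ?case using step_unpack[OF iter _ sg(1) params(2-5)] by (simp add: P_def amin_def)
  qed
  have "\<forall>k. \<exists>u. \<exists>\<alpha>. P k u \<alpha>" using sigma_all by blast
  then obtain U where "\<forall>k. \<exists>\<alpha>. P k (U k) \<alpha>" by metis
  then obtain A where PUA: "\<And>k. P k (U k) (A k)" by metis
  have A: "0 < A k" "A k \<le> 1" "amin \<le> A k" for k using PUA[of k] by (simp_all add: P_def)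
  have pr1: "blk1 (U k) \<in> proj_sparse s1 (blk1 (\<beta> k) - A k *\<^sub>R blk1 (G (\<beta> k)))" for k
    using PUA[of k] by (simp add: P_def)
  have pr2: "blk2 (U k) \<in> proj_sparse s2 (blk2 (\<beta> k) - A k *\<^sub>R blk2 (G (\<beta> k)))" for k
    using PUA[of k] by (simp add: P_def)
  have FU: "F (U k) \<le> F (\<beta> k) - (\<sigma>/2) * (norm (U k - \<beta> k))^2" for k
    using PUA[of k] by (simp add: P_def)
  have br1: "Cnd \<epsilon> (\<beta> k) (U k) \<Longrightarrow> (\<exists>v. goodv \<sigma> (U k) v) \<Longrightarrow> goodv \<sigma> (U k) (\<beta> (Suc k))" for k
    using PUA[of k] by (simp add: P_def)
  have br2: "\<not> (Cnd \<epsilon> (\<beta> k) (U k) \<and> (\<exists>v. goodv \<sigma> (U k) v)) \<Longrightarrow> \<beta> (Suc k) = U k" for k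
    using PUA[of k] by (simp add: P_def)
  have FS: "F (\<beta> (Suc k)) \<le> F (U k)" for k
  proof (cases "Cnd \<epsilon> (\<beta> k) (U k) \<and> (\<exists>v. goodv \<sigma> (U k) v)")
    case True
    then have "F (\<beta> (Suc k)) \<le> F (U k) - (\<sigma>/2) * (norm (\<beta> (Suc k) - U k))^2"
      using br1 by (simp add: goodv_def)
    moreover have "(\<sigma>/2) * (norm (\<beta> (Suc k) - U k))^2 \<ge> 0" using sg by simp
    ultimately show ?thesis by linarith
  next
    case False then show ?thesis using br2 by simp
  qed
  have Sig: "\<beta> k \<in> Sigma_set s1 s2" for k using sigma_all by blast
  have contF: "isCont F x" for x using dF[of x] by (rule has_derivative_continuous)
  have contG: "isCont G x" for x using dG[of x] by (rule has_derivative_continuous)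
  have lF: "(\<lambda>k. F (\<beta> k)) \<longlonglongrightarrow> F bs" by (rule isCont_tendsto_compose[OF contF lim])
  have lF1: "(\<lambda>k. F (\<beta> (Suc k))) \<longlonglongrightarrow> F bs" using LIMSEQ_Suc[OF lF] .
  have sq0: "(\<lambda>k. (norm (U k - \<beta> k))^2) \<longlonglongrightarrow> 0"
  proof (rule tendsto_sandwich[where f="\<lambda>k. 0" and h="\<lambda>k. (2/\<sigma>) * (F (\<beta> k) - F (\<beta> (Suc k)))"])
    show "eventually (\<lambda>k. 0 \<le> (norm (U k - \<beta> k))^2) sequentially" by simp
    show "eventually (\<lambda>k. (norm (U k - \<beta> k))^2 \<le> (2/\<sigma>) * (F (\<beta> k) - F (\<beta> (Suc k)))) sequentially"
    proof (rule always_eventually, rule allI)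
      fix k
      have "(\<sigma>/2) * (norm (U k - \<beta> k))^2 \<le> F (\<beta> k) - F (\<beta> (Suc k))" using FU[of k] FS[of k] by linarith
      then show "(norm (U k - \<beta> k))^2 \<le> (2/\<sigma>) * (F (\<beta> k) - F (\<beta> (Suc k)))" using sg by (simp add: field_simps)
    qed
    show "(\<lambda>k. 0::real) \<longlonglongrightarrow> 0" by simp
    show "(\<lambda>k. (2/\<sigma>) * (F (\<beta> k) - F (\<beta> (Suc k)))) \<longlonglongrightarrow> 0"
      using tendsto_mult_right[OF tendsto_diff[OF lF lF1], of "2/\<sigma>"] by (simp add: mult.commute)
  qed
  have "(\<lambda>k. sqrt ((norm (U k - \<beta> k))^2)) \<longlonglongrightarrow> sqrt 0" by (rule tendsto_real_sqrt[OF sq0])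
  then have "(\<lambda>k. norm (U k - \<beta> k)) \<longlonglongrightarrow> 0" by simp
  then have "(\<lambda>k. U k - \<beta> k) \<longlonglongrightarrow> 0" by (simp add: tendsto_norm_zero_iff)
  from tendsto_add[OF this lim] have lU: "U \<longlonglongrightarrow> bs" by simp
  have lGb: "(\<lambda>k. G (\<beta> k)) \<longlonglongrightarrow> G bs" by (rule isCont_tendsto_compose[OF contG lim])
  have lGU: "(\<lambda>k. G (U k)) \<longlonglongrightarrow> G bs" by (rule isCont_tendsto_compose[OF contG lU])
  have bsp1: "blk1 (\<beta> k) \<in> sparse s1" and bsp2: "blk2 (\<beta> k) \<in> sparse s2" for k
    using Sig[of k] by (simp_all add: Sigma_set_def)
  note B1 = block_analysis[where b="\<lambda>k. blk1 (\<beta> k)" and u="\<lambda>k. blk1 (U k)" and gk="\<lambda>k. blk1 (G (\<beta> k))",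
      OF pr1 bsp1 blk_tendsto(1)[OF lim] blk_tendsto(1)[OF lU] blk_tendsto(1)[OF lGb] amin_pos A(3)]
  note B2 = block_analysis[where b="\<lambda>k. blk2 (\<beta> k)" and u="\<lambda>k. blk2 (U k)" and gk="\<lambda>k. blk2 (G (\<beta> k))",
      OF pr2 bsp2 blk_tendsto(2)[OF lim] blk_tendsto(2)[OF lU] blk_tendsto(2)[OF lGb] amin_pos A(3)]
  define S1 where "S1 = supp (blk1 bs)"
  define S2 where "S2 = supp (blk2 bs)"
  define K where "K = Lip / l"
  have K0: "K \<ge> 0" using Lip_nonneg lpos by (simp add: K_def)
  define \<delta> where "\<delta> = min 1 ((l - \<sigma>) / (2 * (Lip * (K + 1) + 1)))"
  have "Lip * (K + 1) \<ge> 0" using Lip_nonneg K0 by simp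
  then have den: "2 * (Lip * (K + 1) + 1) > 0" by (simp only: distrib_left)
  have lms: "l - \<sigma> > 0" using sg by simp
  have dpos: "\<delta> > 0" using den lms by (simp add: \<delta>_def)
  have dle1: "\<delta> \<le> 1" by (simp add: \<delta>_def)
  have dle2: "(Lip * (K + 1) + 1) * \<delta> \<le> (l - \<sigma>) / 2"
  proof -
    have "\<delta> \<le> (l - \<sigma>) / (2 * (Lip * (K + 1) + 1))" by (simp add: \<delta>_def)
    then show ?thesis using den by (simp add: field_simps)
  qed
  have evC1: "eventually (\<lambda>k. if card S1 = s1 then supp (blk1 (\<beta> k)) = S1 \<and> supp (blk1 (U k)) = S1
                                else norm (blk1 (G (U k))) < \<epsilon>) sequentially"
  proof (cases "card S1 = s1")
    case True
    then show ?thesis using B1(5) by (simp add: S1_def)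
  next
    case False
    then have "card S1 < s1" using B1(2) by (simp add: S1_def)
    then have g0: "blk1 (G bs) = 0" using B1(4) by (simp add: S1_def)
    have "(\<lambda>k. norm (blk1 (G (U k)))) \<longlonglongrightarrow> norm (blk1 (G bs))"
      by (intro tendsto_norm blk_tendsto(1) lGU)
    then have "eventually (\<lambda>k. norm (blk1 (G (U k))) < \<epsilon>) sequentially"
      using g0 params(1) by (intro order_tendstoD(2)) simp_all
    then show ?thesis using False by simp
  qed
  have evC2: "eventually (\<lambda>k. if card S2 = s2 then supp (blk2 (\<beta> k)) = S2 \<and> supp (blk2 (U k)) = S2
                                else norm (blk2 (G (U k))) < \<epsilon>) sequentially"
  proof (cases "card S2 = s2")
    case True
    then show ?thesis using B2(5) by (simp add: S2_def)
  next
    case False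
    then have "card S2 < s2" using B2(2) by (simp add: S2_def)
    then have g0: "blk2 (G bs) = 0" using B2(4) by (simp add: S2_def)
    have "(\<lambda>k. norm (blk2 (G (U k)))) \<longlonglongrightarrow> norm (blk2 (G bs))"
      by (intro tendsto_norm blk_tendsto(2) lGU)
    then have "eventually (\<lambda>k. norm (blk2 (G (U k))) < \<epsilon>) sequentially"
      using g0 params(1) by (intro order_tendstoD(2)) simp_all
    then show ?thesis using False by simp
  qed
  have evS: "eventually (\<lambda>k. norm (U k - bs) < \<delta>) sequentially"
  proof -
    have "(\<lambda>k. U k - bs) \<longlonglongrightarrow> 0" using tendsto_diff[OF lU tendsto_const[of bs]] by simp
    then have "(\<lambda>k. norm (U k - bs)) \<longlonglongrightarrow> 0" by (simp add: tendsto_norm_zero_iff)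
    then show ?thesis using dpos by (intro order_tendstoD(2)) simp_all
  qed
  show ?thesis
    using B1(1) B2(1) evC1 evC2 evS
  proof eventually_elim
    case (elim k)
    define u where "u = U k"
    have sub1: "S1 \<subseteq> supp (blk1 u)" and sub2: "S2 \<subseteq> supp (blk2 u)"
      using elim by (simp_all add: S1_def S2_def u_def)
    have cardu: "card (supp u) \<le> s1 + s2"
      using pr1[of k] pr2[of k] supp_card_split[of u] by (simp add: u_def proj_sparse_def sparse_def)
    have bsz: "\<forall>i. i \<notin> supp u \<longrightarrow> bs $ i = 0"
    proof (intro allI impI)
      fix i assume i: "i \<notin> supp u"
      show "bs $ i = 0"
      proof (cases i)
        case (Inl j)
        then have "j \<notin> supp (blk1 u)" using i by (simp add: supp_def)
        then have "j \<notin> S1" using sub1 by blast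
        then show ?thesis using Inl by (simp add: S1_def supp_def)
      next
        case (Inr j)
        then have "j \<notin> supp (blk2 u)" using i by (simp add: supp_def)
        then have "j \<notin> S2" using sub2 by blast
        then show ?thesis using Inr by (simp add: S2_def supp_def)
      qed
    qed
    have gsz: "\<forall>i\<in>supp u. G bs $ i = 0"
    proof
      fix i assume i: "i \<in> supp u"
      show "G bs $ i = 0"
      proof (cases i)
        case (Inl j)
        then have j: "j \<in> supp (blk1 u)" using i by (simp add: supp_def)
        show ?thesis
        proof (cases "card S1 = s1")
          case True
          then have "j \<in> S1" using elim(3) j by (simp add: u_def)
          then show ?thesis using B1(3) Inl by (simp add: S1_def)
        next
          case False
          then have "card S1 < s1" using B1(2) by (simp add: S1_def)
          then have "blk1 (G bs) = 0" using B1(4) by (simp add: S1_def)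
          then show ?thesis using Inl by (metis blk1_nth zero_index)
        qed
      next
        case (Inr j)
        then have j: "j \<in> supp (blk2 u)" using i by (simp add: supp_def)
        show ?thesis
        proof (cases "card S2 = s2")
          case True
          then have "j \<in> S2" using elim(4) j by (simp add: u_def)
          then show ?thesis using B2(3) Inr by (simp add: S2_def)
        next
          case False
          then have "card S2 < s2" using B2(2) by (simp add: S2_def)
          then have "blk2 (G bs) = 0" using B2(4) by (simp add: S2_def)
          then show ?thesis using Inr by (metis blk2_nth zero_index)
        qed
      qed
    qed
    have cnd: "Cnd \<epsilon> (\<beta> k) u"
      using elim(3,4) unfolding Cnd_def u_def
      by (cases "card S1 = s1"; cases "card S2 = s2") auto
    obtain v0 where v0: "newt u v0" using newt_exists[OF cardu] by blast
    have r: "norm (u - bs) < \<delta>" using elim(5) by (simp add: u_def)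
    have e0: "l * norm (v0 - bs) \<le> Lip * (norm (u - bs))^2" by (rule newt_err[OF v0 cardu bsz gsz])
    then have e0': "norm (v0 - bs) \<le> K * (norm (u - bs))^2" using lpos by (simp add: K_def field_simps)
    have "(norm (u - bs))^2 \<le> \<delta>" 
    proof -
      have n1: "norm (u - bs) \<le> 1" using r dle1 by linarith
      have "norm (u - bs) * norm (u - bs) \<le> norm (u - bs) * 1" by (rule mult_left_mono[OF n1]) simp
      then show ?thesis using r by (simp add: power2_eq_square)
    qed
    then have "K * (norm (u - bs))^2 \<le> K * \<delta>" using K0 by (simp add: mult_left_mono)
    then have nv: "norm (v0 - bs) \<le> K * \<delta>" using e0' by linarith
    have "norm (v0 - u) \<le> norm (v0 - bs) + norm (u - bs)" by (rule norm_diff_triangle_le[of _ bs]) (simp_all add: norm_minus_commute)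
    also have "\<dots> \<le> (K + 1) * \<delta>" using nv r by (simp add: algebra_simps)
    finally have nvu: "norm (v0 - u) \<le> (K + 1) * \<delta>" .
    have "Lip * norm (v0 - u) \<le> Lip * ((K + 1) * \<delta>)" using Lip_nonneg nvu by (simp add: mult_left_mono)
    also have "\<dots> \<le> (Lip * (K + 1) + 1) * \<delta>" using dpos by (simp add: algebra_simps)
    also have "\<dots> \<le> (l - \<sigma>)/2" by (rule dle2)
    finally have "goodv \<sigma> u v0" using newt_accept[OF v0 cardu] v0 by (simp add: goodv_def)
    then have gb: "goodv \<sigma> u (\<beta> (Suc k))" using br1[of k] cnd by (auto simp: u_def)
    then have nb: "newt u (\<beta> (Suc k))" by (simp add: goodv_def)
    have e1: "l * norm (\<beta> (Suc k) - bs) \<le> Lip * (norm (u - bs))^2" by (rule newt_err[OF nb cardu bsz gsz])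
    have P1u: "u $ i = \<beta> k $ i - A k * G (\<beta> k) $ i" if "i \<in> supp u" for i
      using proj_full_P1[OF pr1[of k] pr2[of k]] that by (simp add: u_def)
    have ue: "norm (u - bs) \<le> (1 + Lam) * norm (\<beta> k - bs)" by (rule proj_err[OF P1u bsz gsz A(1) A(2)])
    then have "(norm (u - bs))^2 \<le> ((1 + Lam) * norm (\<beta> k - bs))^2" by (simp add: power_mono)
    then have "Lip * (norm (u - bs))^2 \<le> Lip * ((1 + Lam) * norm (\<beta> k - bs))^2" using Lip_nonneg by (simp add: mult_left_mono)
    with e1 have "l * norm (\<beta> (Suc k) - bs) \<le> Lip * ((1 + Lam) * norm (\<beta> k - bs))^2" by linarith
    moreover have "Lip * ((1 + Lam) * norm (\<beta> k - bs))^2 = l * ((1 + Lam)^2 * Lip / l * (norm (\<beta> k - bs))^2)"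
      using lpos by (simp add: power_mult_distrib)
    ultimately have "l * norm (\<beta> (Suc k) - bs) \<le> l * ((1 + Lam)^2 * Lip / l * (norm (\<beta> k - bs))^2)" by simp
    then show ?case using lpos by (rule mult_left_le_imp_le)
  qed
qed

end


definition sig :: "real \<Rightarrow> real" where "sig t = exp t / (1 + exp t)"
definition dsig :: "real \<Rightarrow> real" where "dsig t = exp t / (1 + exp t)^2"

definition phiL :: "loss \<Rightarrow> real \<Rightarrow> real" where
  "phiL L t = (case L of Lin \<Rightarrow> t | Log \<Rightarrow> sig t)"
definition dphi :: "loss \<Rightarrow> real \<Rightarrow> real" where
  "dphi L t = (case L of Lin \<Rightarrow> 1 | Log \<Rightarrow> dsig t)"
definition ellL :: "loss \<Rightarrow> real \<Rightarrow> real \<Rightarrow> real" where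
  "ellL L yi t = (case L of Lin \<Rightarrow> (1/2) * (yi - t)^2 | Log \<Rightarrow> ln (1 + exp t) - yi * t)"

lemma sig_deriv: "(sig has_real_derivative dsig t) (at t)"
proof -
  have p: "1 + exp t > 0" by (simp add: add_pos_pos)
  have d: "DERIV (\<lambda>t. exp t / (1 + exp t)) t :> (exp t * (1 + exp t) - exp t * exp t) / ((1 + exp t)^Suc (Suc 0))"
    by (rule DERIV_quotient) (use p in \<open>auto intro!: derivative_eq_intros\<close>)
  have "(exp t * (1 + exp t) - exp t * exp t) / ((1 + exp t)^Suc (Suc 0)) = dsig t"
    by (simp add: dsig_def power2_eq_square ring_distribs)
  with d show ?thesis unfolding sig_def by simp
qed

lemma phi_deriv: "(phiL L has_real_derivative dphi L t) (at t)"
proof (cases L)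
  case Lin
  have "phiL Lin = (\<lambda>t. t)" by (simp add: fun_eq_iff phiL_def)
  then show ?thesis using Lin by (simp add: dphi_def)
next
  case Log
  have "phiL Log = sig" by (simp add: fun_eq_iff phiL_def)
  then show ?thesis using Log by (simp add: dphi_def sig_deriv)
qed

lemma ell_deriv: "(ellL L yi has_real_derivative (phiL L t - yi)) (at t)"
proof (cases L)
  case Lin
  show ?thesis unfolding Lin ellL_def phiL_def
    by ((rule derivative_eq_intros refl | simp add: algebra_simps)+, (simp add: field_simps)?)
next
  case Log
  have p: "1 + exp t > 0" by (simp add: add_pos_pos)
  have di: "DERIV (\<lambda>t. 1 + exp t) t :> exp t" by (auto intro!: derivative_eq_intros)
  have d1: "DERIV (\<lambda>t. ln (1 + exp t)) t :> inverse (1 + exp t) * exp t"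
    by (rule DERIV_chain2[OF DERIV_ln[OF p] di])
  have d2: "DERIV (\<lambda>t. yi * t) t :> yi" by (auto intro!: derivative_eq_intros)
  have d: "DERIV (\<lambda>t. ln (1 + exp t) - yi * t) t :> inverse (1 + exp t) * exp t - yi"
    by (rule DERIV_diff[OF d1 d2])
  have f: "(\<lambda>t. ln (1 + exp t) - yi * t) = ellL L yi" using Log by (simp add: fun_eq_iff ellL_def)
  have "inverse (1 + exp t) * exp t - yi = phiL L t - yi" using Log by (simp add: phiL_def sig_def field_simps)
  then show ?thesis using d f by simp
qed

lemma lossf_eq: "lossf L bt X y = (\<Sum>i\<in>UNIV. ellL L (y $ i) ((X $ i) \<bullet> bt))"
  by (cases L) (simp_all add: lossf_def loss_lin_def loss_log_def ellL_def sum_distrib_left)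

lemma mv_nth_inner: "(X *v v) $ i = (X $ i) \<bullet> v"
  by (simp add: matrix_vector_mult_def inner_vec_def mult.commute)

lemma transpose_inner: "(transpose X *v w) \<bullet> h = w \<bullet> (X *v (h::real^'p::finite))"
  by (simp add: transpose_matrix_vector dot_lmul_matrix)

lemma transpose_inner2: "h \<bullet> (transpose X *v w) = (X *v (h::real^'p::finite)) \<bullet> w"
  using transpose_inner[of X w h] by (simp add: inner_commute)

definition phiv :: "loss \<Rightarrow> real^'n \<Rightarrow> real^'n::finite" where
  "phiv L z = (\<chi> i. phiL L (z $ i))"

definition lgrad :: "loss \<Rightarrow> real^'p^'n \<Rightarrow> real^'n \<Rightarrow> real^'p \<Rightarrow> real^'p::finite" where
  "lgrad L X y bt = transpose X *v (phiv L (X *v bt) - y)"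

lemma loss_deriv:
  fixes X :: "real^'p::finite^'n::finite"
  shows "((\<lambda>bt. lossf L bt X y) has_derivative (\<lambda>h. lgrad L X y bt \<bullet> h)) (at bt)"
proof -
  have d: "((\<lambda>bt. ellL L (y $ i) ((X $ i) \<bullet> bt)) has_derivative (\<lambda>h. (phiL L ((X $ i) \<bullet> bt) - y $ i) * ((X $ i) \<bullet> h))) (at bt)" for i
  proof -
    have d1: "((\<lambda>bt. (X $ i) \<bullet> bt) has_derivative (\<lambda>h. (X $ i) \<bullet> h)) (at bt)"
      by (rule bounded_linear.has_derivative[OF bounded_linear_inner_right has_derivative_ident])
    have d2: "(ellL L (y $ i) has_derivative (*) (phiL L ((X $ i) \<bullet> bt) - y $ i)) (at ((X $ i) \<bullet> bt))"
      using ell_deriv[of L "y $ i" "(X $ i) \<bullet> bt"] by (simp add: has_field_derivative_def)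
    show ?thesis using has_derivative_compose[OF d1 d2] by simp
  qed
  have "((\<lambda>bt. \<Sum>i\<in>UNIV. ellL L (y $ i) ((X $ i) \<bullet> bt)) has_derivative
         (\<lambda>h. \<Sum>i\<in>UNIV. (phiL L ((X $ i) \<bullet> bt) - y $ i) * ((X $ i) \<bullet> h))) (at bt)"
    by (rule has_derivative_sum) (rule d)
  moreover have "(\<lambda>h. \<Sum>i\<in>UNIV. (phiL L ((X $ i) \<bullet> bt) - y $ i) * ((X $ i) \<bullet> h)) = (\<lambda>h. lgrad L X y bt \<bullet> h)"
  proof
    fix h
    show "(\<Sum>i\<in>UNIV. (phiL L ((X $ i) \<bullet> bt) - y $ i) * ((X $ i) \<bullet> h)) = lgrad L X y bt \<bullet> h"
      unfolding lgrad_def transpose_inner by (simp add: inner_vec_def phiv_def mv_nth_inner)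
  qed
  ultimately show ?thesis unfolding lossf_eq by simp
qed

lemma vec_has_derivative:
  fixes f :: "'a::real_normed_vector \<Rightarrow> real^'n::finite"
  assumes "\<And>i. ((\<lambda>x. f x $ i) has_derivative (\<lambda>h. f' h $ i)) (at a)"
  shows "(f has_derivative f') (at a)"
proof -
  have "(f has_derivative f') (at a within UNIV)"
  proof (subst has_derivative_componentwise_within, intro ballI)
    fix i :: "real^'n" assume "i \<in> Basis"
    then obtain j where j: "i = axis j 1" by (auto simp: Basis_vec_def)
    show "((\<lambda>x. f x \<bullet> i) has_derivative (\<lambda>x. f' x \<bullet> i)) (at a within UNIV)"
      using assms[of j] by (simp add: j inner_axis)
  qed
  then show ?thesis by simp
qed

definition join :: "real^'p1 \<Rightarrow> real^'p2 \<Rightarrow> real^('p1::finite + 'p2::finite)" where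
  "join p q = (\<chi> k. case k of Inl i \<Rightarrow> p $ i | Inr j \<Rightarrow> q $ j)"

lemma blk_join[simp]: "blk1 (join p q) = p" "blk2 (join p q) = q"
  by (simp_all add: join_def blk1_def blk2_def vec_eq_iff)

lemma join_inner: "join p q \<bullet> h = p \<bullet> blk1 h + q \<bullet> blk2 h"
  using inner_split[of "join p q" h] by simp

lemma join_scale: "r *\<^sub>R join p q = join (r *\<^sub>R p) (r *\<^sub>R q)"
  by (simp add: join_def vec_eq_iff split: sum.split)

lemma join_diff: "join p q - join p' q' = join (p - p') (q - q')"
  by (simp add: join_def vec_eq_iff split: sum.split)

lemma norm_join: "(norm (join p q))^2 = (norm p)^2 + (norm q)^2"
  using norm2_split[of "join p q"] by simp

lemma join_deriv:
  assumes "(P has_derivative P') (at x)" "(Q has_derivative Q') (at x)"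
  shows "((\<lambda>x. join (P x) (Q x)) has_derivative (\<lambda>h. join (P' h) (Q' h))) (at x)"
proof (rule vec_has_derivative)
  fix k
  show "((\<lambda>x. join (P x) (Q x) $ k) has_derivative (\<lambda>h. join (P' h) (Q' h) $ k)) (at x)"
  proof (cases k)
    case (Inl i)
    then show ?thesis using bounded_linear.has_derivative[OF bounded_linear_vec_nth assms(1), of i]
      by (simp add: join_def)
  next
    case (Inr j)
    then show ?thesis using bounded_linear.has_derivative[OF bounded_linear_vec_nth assms(2), of j]
      by (simp add: join_def)
  qed
qed

definition rr :: "real^'p1^'n \<Rightarrow> real^'p2^'n \<Rightarrow> real^('p1::finite + 'p2::finite) \<Rightarrow> real^'n::finite" where
  "rr X Z b = X *v blk1 b - Z *v blk2 b"

lemma rr_bl: "bounded_linear (rr X Z)"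
  unfolding rr_def
  by (intro bounded_linear_sub bounded_linear_compose[OF matrix_vector_mul_bounded_linear blk1_bl]
      bounded_linear_compose[OF matrix_vector_mul_bounded_linear blk2_bl])

definition Gobj :: "loss \<Rightarrow> real^'p1^'n \<Rightarrow> real^'p2^'n \<Rightarrow> real^'n \<Rightarrow> real \<Rightarrow> real \<Rightarrow> real
     \<Rightarrow> real^('p1::finite + 'p2::finite) \<Rightarrow> real^('p1 + 'p2)" where
  "Gobj L X Z y a b c bt = (1 / real CARD('n::finite)) *\<^sub>R
      join (a *\<^sub>R lgrad L X y (blk1 bt) + c *\<^sub>R (transpose X *v rr X Z bt))
           (b *\<^sub>R lgrad L Z y (blk2 bt) - c *\<^sub>R (transpose Z *v rr X Z bt))"

lemma obj_deriv:
  fixes X :: "real^'p1::finite^'n::finite" and Z :: "real^'p2::finite^'n"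
  shows "(obj L X Z y a b c has_derivative (\<lambda>h. Gobj L X Z y a b c bt \<bullet> h)) (at bt)"
proof -
  have t1: "((\<lambda>bt. lossf L (blk1 bt) X y) has_derivative (\<lambda>h. lgrad L X y (blk1 bt) \<bullet> blk1 h)) (at bt)"
    using has_derivative_compose[OF bounded_linear.has_derivative[OF blk1_bl has_derivative_ident] loss_deriv] .
  have t2: "((\<lambda>bt. lossf L (blk2 bt) Z y) has_derivative (\<lambda>h. lgrad L Z y (blk2 bt) \<bullet> blk2 h)) (at bt)"
    using has_derivative_compose[OF bounded_linear.has_derivative[OF blk2_bl has_derivative_ident] loss_deriv] .
  have dr: "(rr X Z has_derivative rr X Z) (at bt)"
    by (rule bounded_linear_imp_has_derivative[OF rr_bl])
  have t3: "((\<lambda>bt. rr X Z bt \<bullet> rr X Z bt) has_derivative (\<lambda>h. rr X Z bt \<bullet> rr X Z h + rr X Z h \<bullet> rr X Z bt)) (at bt)"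
    by (rule has_derivative_inner[OF dr dr])
  have eq: "obj L X Z y a b c = (\<lambda>bt. (1 / real CARD('n)) * (a * lossf L (blk1 bt) X y + b * lossf L (blk2 bt) Z y
                 + (c/2) * (rr X Z bt \<bullet> rr X Z bt)))"
    by (simp add: fun_eq_iff obj_def rr_def power2_norm_eq_inner)
  have d: "(obj L X Z y a b c has_derivative (\<lambda>h. (1 / real CARD('n)) * (a * (lgrad L X y (blk1 bt) \<bullet> blk1 h)
              + b * (lgrad L Z y (blk2 bt) \<bullet> blk2 h) + (c/2) * (rr X Z bt \<bullet> rr X Z h + rr X Z h \<bullet> rr X Z bt)))) (at bt)"
    unfolding eq by (intro has_derivative_mult_right has_derivative_add t1 t2 t3)
  show ?thesis
  proof (rule has_derivative_eq_rhs[OF d], rule ext)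
    fix h
    have r: "rr X Z h = X *v blk1 h - Z *v blk2 h" by (simp add: rr_def)
    show "(1 / real CARD('n)) * (a * (lgrad L X y (blk1 bt) \<bullet> blk1 h)
              + b * (lgrad L Z y (blk2 bt) \<bullet> blk2 h) + (c/2) * (rr X Z bt \<bullet> rr X Z h + rr X Z h \<bullet> rr X Z bt))
          = Gobj L X Z y a b c bt \<bullet> h"
      unfolding Gobj_def join_inner inner_scaleR_left
      by (simp add: inner_add_left inner_diff_left transpose_inner transpose_inner2 r inner_diff_right inner_commute algebra_simps
               del: transpose_matrix_vector)
  qed
qed

definition dmul :: "real^'n \<Rightarrow> real^'n \<Rightarrow> real^'n::finite" where
  "dmul D v = (\<chi> i. D $ i * v $ i)"

definition Dv :: "loss \<Rightarrow> real^'p^'n \<Rightarrow> real^'p \<Rightarrow> real^'n::finite" where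
  "Dv L X bt = (\<chi> i. dphi L ((X *v bt) $ i))"

definition lgH :: "loss \<Rightarrow> real^'p^'n::finite \<Rightarrow> real^'p \<Rightarrow> real^'p \<Rightarrow> real^'p::finite" where
  "lgH L X bt v = transpose X *v dmul (Dv L X bt) (X *v v)"

lemma lgrad_deriv:
  fixes X :: "real^'p::finite^'n::finite"
  shows "(lgrad L X y has_derivative lgH L X bt) (at bt)"
proof -
  have dp: "((\<lambda>bt. phiv L (X *v bt)) has_derivative (\<lambda>v. dmul (Dv L X bt) (X *v v))) (at bt)"
  proof (rule vec_has_derivative)
    fix i
    have d1: "((\<lambda>bt. (X $ i) \<bullet> bt) has_derivative (\<lambda>h. (X $ i) \<bullet> h)) (at bt)"
      by (rule bounded_linear.has_derivative[OF bounded_linear_inner_right has_derivative_ident])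
    have d2: "(phiL L has_derivative (*) (dphi L ((X $ i) \<bullet> bt))) (at ((X $ i) \<bullet> bt))"
      using phi_deriv[of L "(X $ i) \<bullet> bt"] by (simp add: has_field_derivative_def)
    show "((\<lambda>bt. phiv L (X *v bt) $ i) has_derivative (\<lambda>v. dmul (Dv L X bt) (X *v v) $ i)) (at bt)"
      using has_derivative_compose[OF d1 d2] by (simp add: phiv_def dmul_def Dv_def mv_nth_inner)
  qed
  have "((\<lambda>bt. transpose X *v (phiv L (X *v bt) - y)) has_derivative (\<lambda>v. transpose X *v (dmul (Dv L X bt) (X *v v) - 0))) (at bt)"
    by (intro bounded_linear.has_derivative[OF matrix_vector_mul_bounded_linear] has_derivative_diff dp has_derivative_const)
  moreover have "lgrad L X y = (\<lambda>bt. transpose X *v (phiv L (X *v bt) - y))" by (simp add: lgrad_def[abs_def])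
  moreover have "lgH L X bt = (\<lambda>v. transpose X *v dmul (Dv L X bt) (X *v v))" by (simp add: lgH_def[abs_def])
  ultimately show ?thesis by simp
qed

definition Hobj :: "loss \<Rightarrow> real^'p1^'n \<Rightarrow> real^'p2^'n \<Rightarrow> real \<Rightarrow> real \<Rightarrow> real
     \<Rightarrow> real^('p1::finite + 'p2::finite) \<Rightarrow> real^('p1 + 'p2) \<Rightarrow> real^('p1 + 'p2)" where
  "Hobj L X Z a b c bt h = (1 / real CARD('n::finite)) *\<^sub>R
      join (a *\<^sub>R lgH L X (blk1 bt) (blk1 h) + c *\<^sub>R (transpose X *v rr X Z h))
           (b *\<^sub>R lgH L Z (blk2 bt) (blk2 h) - c *\<^sub>R (transpose Z *v rr X Z h))"

lemma Gobj_deriv: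
  fixes X :: "real^'p1::finite^'n::finite" and Z :: "real^'p2::finite^'n"
  shows "(Gobj L X Z y a b c has_derivative Hobj L X Z a b c bt) (at bt)"
proof -
  have b1: "(blk1 has_derivative blk1) (at bt)" by (rule bounded_linear_imp_has_derivative[OF blk1_bl])
  have b2: "(blk2 has_derivative blk2) (at bt)" by (rule bounded_linear_imp_has_derivative[OF blk2_bl])
  have g1: "((\<lambda>bt. lgrad L X y (blk1 bt)) has_derivative (\<lambda>h. lgH L X (blk1 bt) (blk1 h))) (at bt)"
    using has_derivative_compose[OF b1 lgrad_deriv] .
  have g2: "((\<lambda>bt. lgrad L Z y (blk2 bt)) has_derivative (\<lambda>h. lgH L Z (blk2 bt) (blk2 h))) (at bt)"
    using has_derivative_compose[OF b2 lgrad_deriv] .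
  have dr: "(rr X Z has_derivative rr X Z) (at bt)" by (rule bounded_linear_imp_has_derivative[OF rr_bl])
  have m1: "((\<lambda>bt. transpose X *v rr X Z bt) has_derivative (\<lambda>h. transpose X *v rr X Z h)) (at bt)"
    by (rule bounded_linear.has_derivative[OF matrix_vector_mul_bounded_linear dr])
  have m2: "((\<lambda>bt. transpose Z *v rr X Z bt) has_derivative (\<lambda>h. transpose Z *v rr X Z h)) (at bt)"
    by (rule bounded_linear.has_derivative[OF matrix_vector_mul_bounded_linear dr])
  have "((\<lambda>bt. (1 / real CARD('n)) *\<^sub>R join (a *\<^sub>R lgrad L X y (blk1 bt) + c *\<^sub>R (transpose X *v rr X Z bt))
           (b *\<^sub>R lgrad L Z y (blk2 bt) - c *\<^sub>R (transpose Z *v rr X Z bt))) has_derivative Hobj L X Z a b c bt) (at bt)"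
    unfolding Hobj_def
    by (intro has_derivative_scaleR_right join_deriv has_derivative_add has_derivative_diff
        has_derivative_scaleR_right g1 g2 m1 m2)
  then show ?thesis by (simp add: Gobj_def[abs_def] del: transpose_matrix_vector)
qed


definition wsum :: "real^'n \<Rightarrow> real^'n \<Rightarrow> real^'n::finite \<Rightarrow> real" where
  "wsum D u v = (\<Sum>i\<in>UNIV. D $ i * u $ i * v $ i)"

lemma lgH_inner: "d \<bullet> lgH L X bt e = wsum (Dv L X bt) (X *v d) (X *v e)"
  unfolding lgH_def transpose_inner2
  by (simp add: wsum_def inner_vec_def dmul_def algebra_simps del: transpose_matrix_vector)

lemma Hobj_inner:
  fixes X :: "real^'p1::finite^'n::finite" and Z :: "real^'p2::finite^'n"
  shows "d \<bullet> Hobj L X Z a b c bt e = (1 / real CARD('n)) *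
     (a * wsum (Dv L X (blk1 bt)) (X *v blk1 d) (X *v blk1 e) + b * wsum (Dv L Z (blk2 bt)) (Z *v blk2 d) (Z *v blk2 e)
      + c * (rr X Z d \<bullet> rr X Z e))"
proof -
  have "d \<bullet> Hobj L X Z a b c bt e = Hobj L X Z a b c bt e \<bullet> d" by (rule inner_commute)
  also have "\<dots> = (1 / real CARD('n)) *
     ((a * (lgH L X (blk1 bt) (blk1 e) \<bullet> blk1 d) + c * ((transpose X *v rr X Z e) \<bullet> blk1 d))
      + (b * (lgH L Z (blk2 bt) (blk2 e) \<bullet> blk2 d) - c * ((transpose Z *v rr X Z e) \<bullet> blk2 d)))"
    unfolding Hobj_def by (simp only: inner_scaleR_left join_inner inner_add_left inner_diff_left)
  also have "lgH L X (blk1 bt) (blk1 e) \<bullet> blk1 d = wsum (Dv L X (blk1 bt)) (X *v blk1 d) (X *v blk1 e)"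
    using lgH_inner[of "blk1 d" L X "blk1 bt" "blk1 e"] by (simp add: inner_commute)
  also have "lgH L Z (blk2 bt) (blk2 e) \<bullet> blk2 d = wsum (Dv L Z (blk2 bt)) (Z *v blk2 d) (Z *v blk2 e)"
    using lgH_inner[of "blk2 d" L Z "blk2 bt" "blk2 e"] by (simp add: inner_commute)
  also have "(transpose X *v rr X Z e) \<bullet> blk1 d = rr X Z e \<bullet> (X *v blk1 d)" by (rule transpose_inner)
  also have "(transpose Z *v rr X Z e) \<bullet> blk2 d = rr X Z e \<bullet> (Z *v blk2 d)" by (rule transpose_inner)
  finally have calc: "d \<bullet> Hobj L X Z a b c bt e = (1 / real CARD('n)) *
     ((a * wsum (Dv L X (blk1 bt)) (X *v blk1 d) (X *v blk1 e) + c * (rr X Z e \<bullet> (X *v blk1 d)))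
      + (b * wsum (Dv L Z (blk2 bt)) (Z *v blk2 d) (Z *v blk2 e) - c * (rr X Z e \<bullet> (Z *v blk2 d))))" .
  have "rr X Z e \<bullet> (X *v blk1 d) - rr X Z e \<bullet> (Z *v blk2 d) = rr X Z d \<bullet> rr X Z e"
    by (simp add: rr_def[of X Z d] inner_diff_right inner_commute)
  then have "c * (rr X Z e \<bullet> (X *v blk1 d)) - c * (rr X Z e \<bullet> (Z *v blk2 d)) = c * (rr X Z d \<bullet> rr X Z e)"
    by (simp add: right_diff_distrib[symmetric])
  then show ?thesis unfolding calc by (simp add: algebra_simps)
qed

lemma wsum_sym: "wsum D u v = wsum D v u"
  by (simp add: wsum_def mult_ac)

lemma Hobj_sym: "d \<bullet> Hobj L X Z a b c bt e = e \<bullet> Hobj L X Z a b c bt d"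
  unfolding Hobj_inner by (simp add: wsum_sym inner_commute)

lemma wsum_one: "(\<forall>i. D $ i = 1) \<Longrightarrow> wsum D u u = (norm u)^2"
  by (simp add: wsum_def power2_norm_eq_inner inner_vec_def)

lemma wsum_bounds:
  assumes "\<forall>i. 0 \<le> D $ i \<and> D $ i \<le> k"
  shows "0 \<le> wsum D u u" "wsum D u u \<le> k * (norm u)^2"
proof -
  show "0 \<le> wsum D u u" unfolding wsum_def using assms by (intro sum_nonneg) (simp add: mult.assoc)
  have "wsum D u u \<le> (\<Sum>i\<in>UNIV. k * (u $ i * u $ i))"
    unfolding wsum_def using assms by (intro sum_mono) (simp add: mult.assoc mult_right_mono)
  also have "\<dots> = k * (norm u)^2" by (simp add: sum_distrib_left power2_norm_eq_inner inner_vec_def)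
  finally show "wsum D u u \<le> k * (norm u)^2" .
qed

lemma one_plus_exp_ne[simp]: "1 + exp t \<noteq> (0::real)"
  using exp_gt_zero[of t] by linarith

lemma dsig_pos: "0 < dsig t"
proof -
  have "(1 + exp t)^2 > 0" by (simp add: add_pos_pos)
  then show ?thesis unfolding dsig_def by (intro divide_pos_pos) simp_all
qed
lemma dsig_le: "dsig t \<le> 1/4"
proof -
  have "4 * exp t \<le> (1 + exp t)^2" using zero_le_square[of "exp t - 1"]
    by (simp add: power2_eq_square algebra_simps)
  moreover have "(1 + exp t)^2 > 0" by (simp add: add_pos_pos)
  ultimately show ?thesis unfolding dsig_def by (simp add: divide_le_eq)
qed

lemma dsig_le4: "dsig t * 4 \<le> 1" using dsig_le[of t] by simp

lemma Dv_bounds: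
  "\<forall>i. 0 \<le> Dv L X bt $ i \<and> Dv L X bt $ i \<le> (case L of Lin \<Rightarrow> 1 | Log \<Rightarrow> 1/4)"
  by (cases L) (auto simp: Dv_def dphi_def dsig_le4 less_imp_le[OF dsig_pos])

lemma blockmat_mv:
  "blockmat A B C D *v v = join (A *v blk1 v + B *v blk2 v) (C *v blk1 v + D *v blk2 v)"
proof -
  have "(blockmat A B C D *v v) $ k = join (A *v blk1 v + B *v blk2 v) (C *v blk1 v + D *v blk2 v) $ k" for k
    by (cases k) (simp_all add: blockmat_def join_def matrix_vector_mult_def sum_UNIV_sum)
  then show ?thesis by (simp add: vec_eq_iff)
qed

lemma scaleR_mv: "(r *\<^sub>R M) *v x = r *\<^sub>R (M *v (x::real^'m::finite))"
  by (simp add: vec_eq_iff matrix_vector_mult_def sum_distrib_left mult.assoc)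

lemma tmul_inner: "x \<bullet> ((transpose X ** Y) *v z) = (X *v x) \<bullet> (Y *v (z::real^'q::finite))"
  for X :: "real^'p::finite^'n::finite"
  by (simp add: matrix_vector_mul_assoc[symmetric] transpose_inner2 del: transpose_matrix_vector)

lemma blockmat_qf:
  "v \<bullet> (blockmat A B C D *v v) = blk1 v \<bullet> (A *v blk1 v) + blk1 v \<bullet> (B *v blk2 v) + blk2 v \<bullet> (C *v blk1 v) + blk2 v \<bullet> (D *v blk2 v)"
  unfolding blockmat_mv using join_inner[of _ _ v] by (simp add: inner_commute inner_add_left inner_add_right)

lemma norm_rr2: "(norm (rr X Z v))^2 = (norm (X *v blk1 v))^2 - 2 * ((X *v blk1 v) \<bullet> (Z *v blk2 v)) + (norm (Z *v blk2 v))^2"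
  unfolding rr_def power2_norm_eq_inner by (simp add: inner_diff_left inner_diff_right inner_commute)

definition kL :: "loss \<Rightarrow> real \<Rightarrow> real" where "kL L a = (case L of Lin \<Rightarrow> a | Log \<Rightarrow> a/4)"

lemma Qmat_qf:
  fixes X :: "real^'p1::finite^'n::finite" and Z :: "real^'p2::finite^'n"
  shows "v \<bullet> (Qmat L X Z a b c *v v) = (1 / real CARD('n)) *
     (kL L a * (norm (X *v blk1 v))^2 + kL L b * (norm (Z *v blk2 v))^2 + c * (norm (rr X Z v))^2)"
proof -
  have "v \<bullet> (Qmat L X Z a b c *v v) = (1 / real CARD('n)) *
      ((kL L a + c) * ((X *v blk1 v) \<bullet> (X *v blk1 v)) + (- c) * ((X *v blk1 v) \<bullet> (Z *v blk2 v))
       + (- c) * ((Z *v blk2 v) \<bullet> (X *v blk1 v)) + (kL L b + c) * ((Z *v blk2 v) \<bullet> (Z *v blk2 v)))"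
    unfolding Qmat_def Let_def scaleR_mv inner_scaleR_right blockmat_qf
    by (cases L) (simp_all add: kL_def tmul_inner del: transpose_matrix_vector)
  then show ?thesis unfolding norm_rr2 by (simp add: power2_norm_eq_inner inner_commute algebra_simps)
qed

lemma lmat_log_qf:
  fixes X :: "real^'p1::finite^'n::finite" and Z :: "real^'p2::finite^'n"
  shows "v \<bullet> (lmat Log X Z a b c *v v) = (c / real CARD('n)) * (norm (rr X Z v))^2"
proof -
  have "v \<bullet> (lmat Log X Z a b c *v v) = (c / real CARD('n)) *
      (((X *v blk1 v) \<bullet> (X *v blk1 v)) - ((X *v blk1 v) \<bullet> (Z *v blk2 v))
       - ((Z *v blk2 v) \<bullet> (X *v blk1 v)) + ((Z *v blk2 v) \<bullet> (Z *v blk2 v)))"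
    by (simp add: lmat_def scaleR_mv blockmat_qf tmul_inner neg_mv inner_minus_right del: transpose_matrix_vector)
  then show ?thesis unfolding norm_rr2 by (simp add: power2_norm_eq_inner inner_commute algebra_simps)
qed

lemma transpose_blockmat:
  "transpose (blockmat A B C D) = blockmat (transpose A) (transpose C) (transpose B) (transpose D)"
  by (simp add: transpose_def blockmat_def vec_eq_iff split: sum.split)

lemma transpose_scaleR': "transpose (r *\<^sub>R M) = r *\<^sub>R transpose (M::real^'n::finite^'m::finite)"
  by (simp add: transpose_def vec_eq_iff)

lemma transpose_tmul: "transpose (transpose X ** Y) = transpose Y ** (X::real^'p::finite^'n::finite)"
  by (simp add: matrix_transpose_mul)

lemma symm_Qmat: "symm (Qmat L X Z a b c)"
  unfolding symm_def Qmat_def Let_def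
  by (simp add: transpose_scaleR' transpose_blockmat transpose_tmul transpose_neg')

lemma symm_lmat: "symm (lmat L X Z a b c)"
proof (cases L)
  case Lin then show ?thesis using symm_Qmat by (simp add: lmat_def)
next
  case Log then show ?thesis unfolding symm_def lmat_def
    by (simp add: transpose_scaleR' transpose_blockmat transpose_tmul transpose_neg')
qed

lemma symm_XtX: "symm (transpose X ** (X::real^'p::finite^'n::finite))"
  by (simp add: symm_def transpose_tmul)

lemma card_pos': "real CARD('n::finite) > 0" by simp

lemma Hobj_qf_bounds:
  fixes X :: "real^'p1::finite^'n::finite" and Z :: "real^'p2::finite^'n"
  assumes abc: "a > 0" "b > 0" "c > 0"
  shows "d \<bullet> (lmat L X Z a b c *v d) \<le> d \<bullet> Hobj L X Z a b c bt d"
    and "d \<bullet> Hobj L X Z a b c bt d \<le> d \<bullet> (Qmat L X Z a b c *v d)"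
    and "0 \<le> d \<bullet> Hobj L X Z a b c bt d"
proof -
  define u1 where "u1 = X *v blk1 d"
  define u2 where "u2 = Z *v blk2 d"
  define W1 where "W1 = wsum (Dv L X (blk1 bt)) u1 u1"
  define W2 where "W2 = wsum (Dv L Z (blk2 bt)) u2 u2"
  define R where "R = (norm (rr X Z d))^2"
  have H: "d \<bullet> Hobj L X Z a b c bt d = (1 / real CARD('n)) * (a * W1 + b * W2 + c * R)"
    unfolding Hobj_inner W1_def W2_def R_def u1_def u2_def by (simp add: power2_norm_eq_inner)
  have Q: "d \<bullet> (Qmat L X Z a b c *v d) = (1 / real CARD('n)) * (kL L a * (norm u1)^2 + kL L b * (norm u2)^2 + c * R)"
    unfolding Qmat_qf u1_def u2_def R_def ..
  have kk: "\<forall>i. 0 \<le> Dv L X (blk1 bt) $ i \<and> Dv L X (blk1 bt) $ i \<le> (case L of Lin \<Rightarrow> 1 | Log \<Rightarrow> 1/4)"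
           "\<forall>i. 0 \<le> Dv L Z (blk2 bt) $ i \<and> Dv L Z (blk2 bt) $ i \<le> (case L of Lin \<Rightarrow> 1 | Log \<Rightarrow> 1/4)"
    by (rule Dv_bounds)+
  have W1b: "0 \<le> W1" "W1 \<le> (case L of Lin \<Rightarrow> 1 | Log \<Rightarrow> 1/4) * (norm u1)^2"
    unfolding W1_def using wsum_bounds[OF kk(1)] by auto
  have W2b: "0 \<le> W2" "W2 \<le> (case L of Lin \<Rightarrow> 1 | Log \<Rightarrow> 1/4) * (norm u2)^2"
    unfolding W2_def using wsum_bounds[OF kk(2)] by auto
  have R0: "R \<ge> 0" by (simp add: R_def)
  have n0: "1 / real CARD('n) > 0" by simp
  have aW1: "a * W1 \<le> kL L a * (norm u1)^2"
    using mult_left_mono[OF W1b(2), of a] abc by (cases L) (simp_all add: kL_def)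
  have bW2: "b * W2 \<le> kL L b * (norm u2)^2"
    using mult_left_mono[OF W2b(2), of b] abc by (cases L) (simp_all add: kL_def)
  show "d \<bullet> Hobj L X Z a b c bt d \<le> d \<bullet> (Qmat L X Z a b c *v d)"
    unfolding H Q using aW1 bW2 n0 by (intro mult_left_mono) simp_all
  have pos: "0 \<le> a * W1 + b * W2 + c * R" using W1b W2b R0 abc by simp
  show "0 \<le> d \<bullet> Hobj L X Z a b c bt d" unfolding H using pos n0 by simp
  show "d \<bullet> (lmat L X Z a b c *v d) \<le> d \<bullet> Hobj L X Z a b c bt d"
  proof (cases L)
    case Log
    have "d \<bullet> (lmat L X Z a b c *v d) = (1 / real CARD('n)) * (c * R)"
      using Log lmat_log_qf[of d X Z a b c] by (simp add: R_def)
    also have "\<dots> \<le> (1 / real CARD('n)) * (a * W1 + b * W2 + c * R)"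
      using W1b W2b abc n0 by (intro mult_left_mono) simp_all
    finally show ?thesis unfolding H .
  next
    case Lin
    have "W1 = (norm u1)^2" unfolding W1_def using Lin by (intro wsum_one) (simp add: Dv_def dphi_def)
    moreover have "W2 = (norm u2)^2" unfolding W2_def using Lin by (intro wsum_one) (simp add: Dv_def dphi_def)
    ultimately have "d \<bullet> Hobj L X Z a b c bt d = d \<bullet> (Qmat L X Z a b c *v d)"
      unfolding H Q using Lin by (simp add: kL_def)
    then show ?thesis using Lin by (simp add: lmat_def)
  qed
qed

lemma lf_le:
  assumes c: "card (supp d) \<le> s"
  shows "lf L X Z a b c s * (norm d)^2 \<le> d \<bullet> (lmat L X Z a b c *v d)"
proof (cases "d = 0")
  case True then show ?thesis by simp
next
  case False
  define M where "M = lmat L X Z a b c"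
  define T where "T = supp d"
  have T: "T \<noteq> {}" using False by (auto simp: T_def supp_def vec_eq_iff)
  have dT: "\<forall>i. i \<notin> T \<longrightarrow> d $ i = 0" by (simp add: T_def supp_def)
  have r: "d \<bullet> (M *v d) \<ge> lam_min_sub M T * (norm d)^2"
    by (rule rayleigh_min_sub[OF _ T dT]) (simp add: M_def symm_lmat)
  have eqset: "{lam_min_sub M T | T. T \<noteq> {} \<and> card T \<le> s} = (\<lambda>T. lam_min_sub M T) ` {T. T \<noteq> {} \<and> card T \<le> s}"
    by auto
  have "lf L X Z a b c s = Min ((\<lambda>T. lam_min_sub M T) ` {T. T \<noteq> {} \<and> card T \<le> s})"
    unfolding lf_def M_def[symmetric] eqset ..
  also have "\<dots> \<le> lam_min_sub M T"
    by (rule Min_le) (use T c in \<open>auto simp: T_def\<close>)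
  finally have "lf L X Z a b c s * (norm d)^2 \<le> lam_min_sub M T * (norm d)^2" by (simp add: mult_right_mono)
  with r show ?thesis by (simp add: M_def)
qed

lemma Lf_ge: "d \<bullet> (Qmat L X Z a b c *v d) \<le> Lf L X Z a b c * (norm d)^2"
  unfolding Lf_def by (rule rayleigh_max[OF symm_Qmat])

lemma disc:
  fixes A B C :: real
  assumes "\<And>t. 0 \<le> A - 2 * t * B + t^2 * C" "C \<ge> 0"
  shows "B^2 \<le> A * C"
proof (cases "C = 0")
  case False
  then have Cp: "C > 0" using assms(2) by simp
  have "0 \<le> A - 2 * (B / C) * B + (B / C)^2 * C" by (rule assms(1))
  also have "\<dots> = A - B^2 / C" using Cp by (simp add: power2_eq_square field_simps)
  finally have "B^2 / C \<le> A" by simp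
  then show ?thesis using Cp by (simp add: divide_le_eq mult.commute)
next
  case True
  show ?thesis
  proof (cases "B = 0")
    case True then show ?thesis using \<open>C = 0\<close> by simp
  next
    case False
    have "0 \<le> A - 2 * ((A + 1) / (2 * B)) * B + ((A + 1) / (2 * B))^2 * C" by (rule assms(1))
    also have "\<dots> = -1" using False \<open>C = 0\<close> by (simp add: field_simps)
    finally show ?thesis by simp
  qed
qed

lemma psd_opnorm:
  fixes H :: "real^'m::finite \<Rightarrow> real^'m"
  assumes lin: "linear H" and sym: "\<And>d e. d \<bullet> H e = e \<bullet> H d"
    and psd: "\<And>d. 0 \<le> d \<bullet> H d" and up: "\<And>d. d \<bullet> H d \<le> Lam * (norm d)^2"
  shows "norm (H d) \<le> Lam * norm d"
proof -
  define e where "e = H d"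
  have "0 \<le> (d - t *\<^sub>R e) \<bullet> H (d - t *\<^sub>R e)" for t by (rule psd)
  moreover have "(d - t *\<^sub>R e) \<bullet> H (d - t *\<^sub>R e) = d \<bullet> H d - 2 * t * (e \<bullet> H d) + t^2 * (e \<bullet> H e)" for t
  proof -
    have hl: "H (d - t *\<^sub>R e) = H d - t *\<^sub>R H e" using lin by (simp add: linear_diff linear_scale)
    have sy: "d \<bullet> H e = e \<bullet> H d" by (rule sym)
    show ?thesis unfolding hl using sy by (simp add: inner_diff_left inner_diff_right power2_eq_square algebra_simps)
  qed
  ultimately have "\<And>t. 0 \<le> d \<bullet> H d - 2 * t * (e \<bullet> H d) + t^2 * (e \<bullet> H e)" by simp
  from disc[OF this psd] have D: "(e \<bullet> H d)^2 \<le> (d \<bullet> H d) * (e \<bullet> H e)" .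
  have ee: "e \<bullet> H d = (norm e)^2" by (simp add: e_def power2_norm_eq_inner)
  show ?thesis
  proof (cases "e = 0")
    case True
    have "0 \<le> Lam * norm d"
    proof (cases "d = 0")
      case True then show ?thesis by simp
    next
      case False
      have "0 \<le> Lam * (norm d)^2" using psd[of d] up[of d] by linarith
      then have "0 \<le> Lam * norm d * norm d" by (simp add: power2_eq_square mult.assoc)
      then show ?thesis using False by (simp add: zero_le_mult_iff)
    qed
    then show ?thesis using True by (simp add: e_def)
  next
    case False
    have "(norm e)^2 * (norm e)^2 \<le> (Lam * (norm d)^2) * (Lam * (norm e)^2)"
    proof -
      have "(norm e)^2 * (norm e)^2 = (e \<bullet> H d)^2" by (simp add: ee power2_eq_square)
      also have "\<dots> \<le> (d \<bullet> H d) * (e \<bullet> H e)" by (rule D)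
      also have "\<dots> \<le> (Lam * (norm d)^2) * (Lam * (norm e)^2)"
        using up[of d] up[of e] psd[of d] psd[of e] by (intro mult_mono) simp_all
      finally show ?thesis .
    qed
    moreover have "(Lam * (norm d)^2) * (Lam * (norm e)^2) = ((Lam * norm d)^2) * (norm e)^2"
      by (simp add: power2_eq_square)
    ultimately have "(norm e)^2 * (norm e)^2 \<le> ((Lam * norm d)^2) * (norm e)^2" by simp
    moreover have "(norm e)^2 > 0" using False by simp
    ultimately have "(norm e)^2 \<le> (Lam * norm d)^2" by (rule mult_right_le_imp_le)
    moreover have "0 \<le> Lam * norm d"
    proof -
      have "0 < (norm e)^2" using False by simp
      also have "(norm e)^2 = e \<bullet> H d" by (simp add: ee)
      also have "\<dots> = d \<bullet> H e" by (simp add: sym)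
      finally have "0 < d \<bullet> H e" .
      have "0 \<le> Lam * (norm d)^2" using psd[of d] up[of d] by linarith
      moreover have "d \<noteq> 0" using \<open>0 < d \<bullet> H e\<close> by auto
      ultimately have "0 \<le> Lam * norm d * norm d" by (simp add: power2_eq_square mult.assoc)
      then show ?thesis using \<open>d \<noteq> 0\<close> by (simp add: zero_le_mult_iff)
    qed
    ultimately show ?thesis unfolding e_def using power2_le_imp_le by blast
  qed
qed

lemma sig_bounds: "0 < sig t" "sig t < 1"
proof -
  have p: "0 < 1 + exp t" using exp_gt_zero[of t] by linarith
  show "0 < sig t" unfolding sig_def using p by simp
  show "sig t < 1" unfolding sig_def using p by (simp add: divide_less_eq)
qed

lemma dsig_alt: "dsig = (\<lambda>t. sig t - sig t * sig t)"
proof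
  fix t :: real
  define E where "E = exp t"
  have h: "1 + E \<noteq> 0" using exp_gt_zero[of t] unfolding E_def by linarith
  have a1: "1 - E/(1+E) = 1/(1+E)" using h by (simp add: field_simps)
  have "E/(1+E) - E/(1+E)*(E/(1+E)) = E/(1+E) * (1 - E/(1+E))" by (simp add: algebra_simps)
  also have "\<dots> = E/(1+E) * (1/(1+E))" by (simp add: a1)
  also have "\<dots> = E/(1+E)^2" by (simp add: power2_eq_square)
  finally show "dsig t = sig t - sig t * sig t" unfolding dsig_def sig_def E_def by simp
qed

lemma dsig_lip: "\<bar>dsig s - dsig t\<bar> \<le> \<bar>s - t\<bar>"
proof -
  define D where "D t = dsig t - (dsig t * sig t + sig t * dsig t)" for t
  have der: "DERIV dsig x :> D x" for x
  proof -
    have "DERIV (\<lambda>t. sig t - sig t * sig t) x :> D x"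
      unfolding D_def using DERIV_diff[OF sig_deriv[of x] DERIV_mult[OF sig_deriv[of x] sig_deriv[of x]]] by simp
    then show ?thesis by (simp only: dsig_alt[symmetric])
  qed
  have Db: "\<bar>D x\<bar> \<le> 1" for x
  proof -
    have "D x = dsig x * (1 - 2 * sig x)" by (simp add: D_def algebra_simps)
    moreover have "\<bar>1 - 2 * sig x\<bar> \<le> 1" using sig_bounds[of x] by linarith
    moreover have "0 \<le> dsig x" "dsig x \<le> 1" using dsig_pos[of x] dsig_le[of x] by linarith+
    ultimately show ?thesis by (simp add: abs_mult) (metis abs_of_nonneg mult_le_one abs_ge_zero)
  qed
  have main: "\<bar>dsig b - dsig a\<bar> \<le> b - a" if ab: "a < b" for a b
  proof -
    obtain z where "dsig b - dsig a = (b - a) * D z" using MVT2[OF ab der] by blast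
    then have "\<bar>dsig b - dsig a\<bar> = (b - a) * \<bar>D z\<bar>" using ab by (simp add: abs_mult)
    also have "\<dots> \<le> (b - a) * 1" using Db[of z] ab by (intro mult_left_mono) simp_all
    finally show ?thesis by simp
  qed
  show ?thesis
  proof (cases s t rule: linorder_cases)
    case less then show ?thesis using main[OF less] by (simp add: abs_minus_commute)
  next
    case equal then show ?thesis by simp
  next
    case greater then show ?thesis using main[OF greater] by simp
  qed
qed

lemma opb:
  fixes X :: "real^'p::finite^'n::finite"
  assumes E: "\<And>i. \<bar>E $ i\<bar> \<le> m"
  shows "norm (transpose X *v dmul E (X *v w)) \<le> m * lam_max (transpose X ** X) * norm w"
proof -
  define lam where "lam = lam_max (transpose X ** X)"
  have Xb: "(norm (X *v v))^2 \<le> lam * (norm v)^2" for v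
  proof -
    have "(norm (X *v v))^2 = v \<bullet> ((transpose X ** X) *v v)" by (simp add: tmul_inner power2_norm_eq_inner del: transpose_matrix_vector)
    also have "\<dots> \<le> lam * (norm v)^2" unfolding lam_def by (rule rayleigh_max[OF symm_XtX])
    finally show ?thesis .
  qed
  have lam0: "lam \<ge> 0"
  proof -
    have "0 \<le> (norm (X *v axis undefined 1))^2" by simp
    also have "\<dots> \<le> lam * (norm (axis undefined (1::real) :: real^'p))^2" by (rule Xb)
    finally show ?thesis by simp
  qed
  have m0: "m \<ge> 0" using E[of undefined] by linarith
  have Xn: "norm (X *v v) \<le> sqrt lam * norm v" for v
  proof (rule power2_le_imp_le)
    show "(norm (X *v v))^2 \<le> (sqrt lam * norm v)^2" using Xb[of v] lam0 by (simp add: power_mult_distrib)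
    show "0 \<le> sqrt lam * norm v" using lam0 by simp
  qed
  have dm: "norm (dmul E u) \<le> m * norm u" for u :: "real^'n"
  proof -
    have "\<bar>dmul E u $ i\<bar> \<le> \<bar>(m *\<^sub>R u) $ i\<bar>" for i
      using E[of i] m0 by (simp add: dmul_def abs_mult mult_right_mono)
    then have "norm (dmul E u) \<le> norm (m *\<^sub>R u)" by (rule norm_le_componentwise)
    then show ?thesis using m0 by simp
  qed
  define z where "z = transpose X *v dmul E (X *v w)"
  have "(norm z)^2 = (X *v z) \<bullet> dmul E (X *v w)"
    unfolding power2_norm_eq_inner by (simp add: z_def[symmetric] transpose_inner2[of z X, symmetric] del: transpose_matrix_vector)
  also have "\<dots> \<le> norm (X *v z) * norm (dmul E (X *v w))" by (rule norm_cauchy_schwarz)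
  also have "\<dots> \<le> (sqrt lam * norm z) * (m * (sqrt lam * norm w))"
    using Xn[of z] Xn[of w] dm[of "X *v w"] m0 lam0
    by (intro mult_mono) (auto intro: order_trans mult_left_mono)
  also have "\<dots> = (m * lam * norm w) * norm z" using lam0 by (simp add: algebra_simps)
  finally have sq: "norm z * norm z \<le> (m * lam * norm w) * norm z" by (simp add: power2_eq_square)
  show ?thesis
  proof (cases "z = 0")
    case True then show ?thesis using m0 lam0 by (simp add: z_def lam_def)
  next
    case False then have "norm z > 0" by simp
    with sq have "norm z \<le> m * lam * norm w" by (simp add: mult_le_cancel_right)
    then show ?thesis by (simp add: z_def lam_def)
  qed
qed

lemma Hobj_Lin_const: "Hobj Lin X Z a b c x d = Hobj Lin X Z a b c y d"
  by (simp add: Hobj_def lgH_def Dv_def dphi_def)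

lemma blk_norm_le: "norm (blk1 v) \<le> norm v" "norm (blk2 v) \<le> norm v"
proof -
  have "(norm (blk1 v))^2 \<le> (norm v)^2" "(norm (blk2 v))^2 \<le> (norm v)^2" using norm2_split[of v] by simp_all
  then show "norm (blk1 v) \<le> norm v" "norm (blk2 v) \<le> norm v" by (simp_all add: power2_le_iff_abs_le)
qed

lemma norm_join_le: "norm (join p q) \<le> norm p + norm q"
proof -
  have "(norm (join p q))^2 \<le> (norm p + norm q)^2" unfolding norm_join by (simp add: power2_sum)
  then show ?thesis by (simp add: power2_le_iff_abs_le)
qed

lemma l1_bound: "\<bar>x \<bullet> v\<bar> \<le> l1norm x * norm (v::real^'m::finite)"
proof -
  have "\<bar>x \<bullet> v\<bar> \<le> (\<Sum>j\<in>UNIV. \<bar>x $ j * v $ j\<bar>)" unfolding inner_vec_def inner_real_def by (rule sum_abs)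
  also have "\<dots> \<le> (\<Sum>j\<in>UNIV. \<bar>x $ j\<bar> * norm v)"
    by (intro sum_mono) (simp add: abs_mult mult_left_mono component_le_norm_cart)
  also have "\<dots> = l1norm x * norm v" by (simp add: l1norm_def sum_distrib_right)
  finally show ?thesis .
qed

lemma l1_max: "l1norm (X $ i) \<le> Max (range (\<lambda>i. l1norm ((X::real^'m::finite^'n::finite) $ i)))"
  by (rule Max_ge) auto

lemma lam_max_XtX_nonneg: "lam_max (transpose X ** (X::real^'p::finite^'n::finite)) \<ge> 0"
proof -
  have "0 \<le> (norm (X *v axis undefined 1))^2" by simp
  also have "\<dots> = axis undefined 1 \<bullet> ((transpose X ** X) *v axis undefined (1::real))"
    by (simp add: tmul_inner power2_norm_eq_inner del: transpose_matrix_vector)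
  also have "\<dots> \<le> lam_max (transpose X ** X) * (norm (axis undefined (1::real) :: real^'p))^2"
    by (rule rayleigh_max[OF symm_XtX])
  finally show ?thesis by simp
qed

lemma l1norm_nonneg: "0 \<le> l1norm v" by (simp add: l1norm_def sum_nonneg)

lemma lgH_diff_bound:
  fixes X :: "real^'p::finite^'n::finite"
  shows "norm (lgH Log X x w - lgH Log X x' w) \<le>
     (Max (range (\<lambda>i. l1norm (X $ i))) * norm (x - x')) * lam_max (transpose X ** X) * norm w"
proof -
  define E where "E = Dv Log X x - Dv Log X x'"
  have eq: "lgH Log X x w - lgH Log X x' w = transpose X *v dmul E (X *v w)"
  proof -
    have dd: "dmul (Dv Log X x) (X *v w) - dmul (Dv Log X x') (X *v w) = dmul E (X *v w)"
      by (simp add: E_def dmul_def vec_eq_iff left_diff_distrib)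
    show ?thesis unfolding lgH_def dd[symmetric] by (simp only: matrix_vector_mult_diff_distrib)
  qed
  have Eb: "\<bar>E $ i\<bar> \<le> Max (range (\<lambda>i. l1norm (X $ i))) * norm (x - x')" for i
  proof -
    have "\<bar>E $ i\<bar> = \<bar>dsig ((X $ i) \<bullet> x) - dsig ((X $ i) \<bullet> x')\<bar>"
      by (simp add: E_def Dv_def dphi_def mv_nth_inner)
    also have "\<dots> \<le> \<bar>(X $ i) \<bullet> x - (X $ i) \<bullet> x'\<bar>" by (rule dsig_lip)
    also have "\<dots> = \<bar>(X $ i) \<bullet> (x - x')\<bar>" by (simp add: inner_diff_right)
    also have "\<dots> \<le> l1norm (X $ i) * norm (x - x')" by (rule l1_bound)
    also have "\<dots> \<le> Max (range (\<lambda>i. l1norm (X $ i))) * norm (x - x')"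
      by (intro mult_right_mono l1_max) simp
    finally show ?thesis .
  qed
  show ?thesis unfolding eq by (rule opb[OF Eb])
qed

lemma Hobj_Log_lip:
  fixes X :: "real^'p1::finite^'n::finite" and Z :: "real^'p2::finite^'n"
  assumes ab: "a > 0" "b > 0"
  shows "norm (Hobj Log X Z a b c x d - Hobj Log X Z a b c y d) \<le> Cf X Z a b / 2 * norm (x - y) * norm d"
proof -
  define M1 where "M1 = Max (range (\<lambda>i. l1norm (X $ i)))"
  define M2 where "M2 = Max (range (\<lambda>i. l1norm (Z $ i)))"
  define l1 where "l1 = lam_max (transpose X ** X)"
  define l2 where "l2 = lam_max (transpose Z ** Z)"
  define A where "A = a * M1 * l1"
  define B where "B = b * M2 * l2"
  define T1 where "T1 = lgH Log X (blk1 x) (blk1 d) - lgH Log X (blk1 y) (blk1 d)"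
  define T2 where "T2 = lgH Log Z (blk2 x) (blk2 d) - lgH Log Z (blk2 y) (blk2 d)"
  have M10: "M1 \<ge> 0" unfolding M1_def using l1_max[of X undefined] l1norm_nonneg[of "X $ undefined"] by linarith
  have M20: "M2 \<ge> 0" unfolding M2_def using l1_max[of Z undefined] l1norm_nonneg[of "Z $ undefined"] by linarith
  have l10: "l1 \<ge> 0" unfolding l1_def by (rule lam_max_XtX_nonneg)
  have l20: "l2 \<ge> 0" unfolding l2_def by (rule lam_max_XtX_nonneg)
  have A0: "A \<ge> 0" using ab M10 l10 by (simp add: A_def)
  have B0: "B \<ge> 0" using ab M20 l20 by (simp add: B_def)
  have eq: "Hobj Log X Z a b c x d - Hobj Log X Z a b c y d = (1 / real CARD('n)) *\<^sub>R join (a *\<^sub>R T1) (b *\<^sub>R T2)"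
    unfolding Hobj_def T1_def T2_def scaleR_diff_right[symmetric] join_diff
    by (simp add: scaleR_diff_right algebra_simps)
  have nT1: "norm T1 \<le> (M1 * norm (x - y)) * l1 * norm d"
  proof -
    have "norm T1 \<le> (M1 * norm (blk1 x - blk1 y)) * l1 * norm (blk1 d)"
      unfolding T1_def M1_def l1_def by (rule lgH_diff_bound)
    also have "\<dots> \<le> (M1 * norm (x - y)) * l1 * norm d"
      using blk_norm_le(1)[of "x - y"] blk_norm_le(1)[of d] M10 l10
      by (intro mult_mono mult_left_mono) (simp_all add: mult_nonneg_nonneg)
    finally show ?thesis .
  qed
  have nT2: "norm T2 \<le> (M2 * norm (x - y)) * l2 * norm d"
  proof -
    have "norm T2 \<le> (M2 * norm (blk2 x - blk2 y)) * l2 * norm (blk2 d)"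
      unfolding T2_def M2_def l2_def by (rule lgH_diff_bound)
    also have "\<dots> \<le> (M2 * norm (x - y)) * l2 * norm d"
      using blk_norm_le(2)[of "x - y"] blk_norm_le(2)[of d] M20 l20
      by (intro mult_mono mult_left_mono) (simp_all add: mult_nonneg_nonneg)
    finally show ?thesis .
  qed
  have "norm (Hobj Log X Z a b c x d - Hobj Log X Z a b c y d) = (1 / real CARD('n)) * norm (join (a *\<^sub>R T1) (b *\<^sub>R T2))"
    unfolding eq by simp
  also have "\<dots> \<le> (1 / real CARD('n)) * (a * norm T1 + b * norm T2)"
    using norm_join_le[of "a *\<^sub>R T1" "b *\<^sub>R T2"] ab by (intro mult_left_mono) simp_all
  also have "\<dots> \<le> (1 / real CARD('n)) * (a * ((M1 * norm (x - y)) * l1 * norm d) + b * ((M2 * norm (x - y)) * l2 * norm d))"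
    using nT1 nT2 ab by (intro mult_left_mono add_mono) simp_all
  also have "\<dots> = (1 / real CARD('n)) * ((A + B) * (norm (x - y) * norm d))" by (simp add: A_def B_def algebra_simps)
  finally have bnd0: "norm (Hobj Log X Z a b c x d - Hobj Log X Z a b c y d) \<le> (1 / real CARD('n)) * ((A + B) * (norm (x - y) * norm d))"
    .
  have "(A + B) * (norm (x - y) * norm d) \<le> (2 * max A B) * (norm (x - y) * norm d)"
    by (intro mult_right_mono) simp_all
  then have "(1 / real CARD('n)) * ((A + B) * (norm (x - y) * norm d)) \<le> (1 / real CARD('n)) * ((2 * max A B) * (norm (x - y) * norm d))"
    by (intro mult_left_mono) simp_all
  with bnd0 have bnd: "norm (Hobj Log X Z a b c x d - Hobj Log X Z a b c y d) \<le> (1 / real CARD('n)) * ((2 * max A B) * (norm (x - y) * norm d))"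
    by linarith
  have s2: "4/3 \<le> sqrt (2::real)" by (rule real_le_rsqrt) (simp add: power2_eq_square)
  have Cf: "Cf X Z a b / 2 = (3 * sqrt 2 / (2 * real CARD('n))) * max A B"
    by (simp add: Cf_def A_def B_def M1_def M2_def l1_def l2_def)
  have "(1 / real CARD('n)) * (2 * max A B) \<le> (3 * sqrt 2 / (2 * real CARD('n))) * max A B"
  proof -
    have "(1 / real CARD('n)) * 2 \<le> 3 * sqrt 2 / (2 * real CARD('n))" using s2 by (simp add: field_simps)
    moreover have "max A B \<ge> 0" using A0 by simp
    ultimately show ?thesis by (metis mult.assoc mult_right_mono)
  qed
  then have "((1 / real CARD('n)) * (2 * max A B)) * (norm (x - y) * norm d) \<le> ((3 * sqrt 2 / (2 * real CARD('n))) * max A B) * (norm (x - y) * norm d)"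
    by (rule mult_right_mono) simp
  then have "(1 / real CARD('n)) * ((2 * max A B) * (norm (x - y) * norm d)) \<le> Cf X Z a b / 2 * (norm (x - y) * norm d)"
    unfolding Cf by (simp only: mult.assoc)
  with bnd show ?thesis by (simp add: mult.assoc)
qed


theorem theorem4p5:
  fixes L :: loss
    and X :: "real^'p1::finite^'n::finite" and Z :: "real^'p2::finite^'n"
    and y :: "real^'n"
    and a b c \<sigma> \<epsilon> \<alpha>0 \<gamma> :: real
    and s1 s2 :: nat
    and \<beta> :: "nat \<Rightarrow> real^('p1 + 'p2)"
    and \<beta>star :: "real^('p1 + 'p2)"
  assumes abc: "a > 0" "b > 0" "c > 0"
    and y01: "L = Log \<Longrightarrow> \<forall>i. y $ i \<in> {0, 1}"
    and s1: "1 \<le> s1" "s1 \<le> CARD('p1)"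
    and s2: "1 \<le> s2" "s2 \<le> CARD('p2)"
    and reg: "s_regular (hcat X Z) (s1 + s2)"
    and sig: "0 < \<sigma>" "\<sigma> < lf L X Z a b c (s1 + s2) / 2"
    and params: "\<epsilon> > 0" "0 < \<alpha>0" "\<alpha>0 \<le> 1" "0 < \<gamma>" "\<gamma> < 1"
    and start: "\<beta> 0 \<in> Sigma_set s1 s2"
    and iter: "\<And>k. gpna_step (obj L X Z y a b c) s1 s2 \<sigma> \<epsilon> \<alpha>0 \<gamma> (\<beta> k) (\<beta> (Suc k))"
    and lim: "\<beta> \<longlonglongrightarrow> \<beta>star"
  shows "(L = Log \<longrightarrow>
            (\<forall>\<^sub>F k in sequentially.
               norm (\<beta> (Suc k) - \<beta>star)
                 \<le> (1 + Lf L X Z a b c)^2 * Cf X Z a b / (2 * lf L X Z a b c (s1 + s2))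
                     * (norm (\<beta> k - \<beta>star))^2))
       \<and> (L = Lin \<longrightarrow> (\<forall>\<^sub>F k in sequentially. \<beta> (Suc k) = \<beta>star))"
proof -
  define lfv where "lfv = lf L X Z a b c (s1 + s2)"
  define Lip where "Lip = (case L of Lin \<Rightarrow> 0 | Log \<Rightarrow> Cf X Z a b / 2)"
  have lpos: "lfv > 0" using sig by (simp add: lfv_def)
  interpret A: gpna_abs "obj L X Z y a b c" "Gobj L X Z y a b c" "Hobj L X Z a b c" s1 s2 lfv "Lf L X Z a b c" Lip
  proof unfold_locales
    show "(obj L X Z y a b c has_derivative (\<lambda>h. Gobj L X Z y a b c x \<bullet> h)) (at x)" for x by (rule obj_deriv)
    show "(Gobj L X Z y a b c has_derivative Hobj L X Z a b c x) (at x)" for x by (rule Gobj_deriv)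
    show "d \<bullet> Hobj L X Z a b c x e = e \<bullet> Hobj L X Z a b c x d" for x d e by (rule Hobj_sym)
    show "lfv * (norm d)^2 \<le> d \<bullet> Hobj L X Z a b c x d" if "card (supp d) \<le> s1 + s2" for x d
      using lf_le[OF that, of L X Z a b c] Hobj_qf_bounds(1)[OF abc, of d L X Z x] by (simp add: lfv_def)
    show "norm (Hobj L X Z a b c x d) \<le> Lf L X Z a b c * norm d" for x d
    proof (rule psd_opnorm)
      show "linear (Hobj L X Z a b c x)"
        using Gobj_deriv[of L X Z y a b c x] by (simp add: has_derivative_def bounded_linear.linear)
      show "d \<bullet> Hobj L X Z a b c x e = e \<bullet> Hobj L X Z a b c x d" for d e by (rule Hobj_sym)
      show "0 \<le> d \<bullet> Hobj L X Z a b c x d" for d by (rule Hobj_qf_bounds(3)[OF abc])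
      show "d \<bullet> Hobj L X Z a b c x d \<le> Lf L X Z a b c * (norm d)^2" for d
        using Hobj_qf_bounds(2)[OF abc, of d L X Z x] Lf_ge[of d L X Z a b c] by linarith
    qed
    show "norm (Hobj L X Z a b c x d - Hobj L X Z a b c y' d) \<le> Lip * norm (x - y') * norm d" for x y' d
    proof (cases L)
      case Lin then show ?thesis using Hobj_Lin_const[of X Z a b c x d y'] by (simp add: Lip_def)
    next
      case Log then show ?thesis using Hobj_Log_lip[OF abc(1,2)] by (simp add: Lip_def)
    qed
    show "0 < lfv" by (rule lpos)
  qed
  have sg2: "2 * \<sigma> < lfv" using sig by (simp add: lfv_def)
  have main: "\<forall>\<^sub>F k in sequentially. norm (\<beta> (Suc k) - \<beta>star) \<le> (1 + Lf L X Z a b c)^2 * Lip / lfv * (norm (\<beta> k - \<beta>star))^2"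
    by (rule A.abs_main[OF sig(1) sg2 params start iter lim])
  show ?thesis
  proof (intro conjI impI)
    assume Log: "L = Log"
    have "(1 + Lf L X Z a b c)^2 * Lip / lfv = (1 + Lf L X Z a b c)^2 * Cf X Z a b / (2 * lf L X Z a b c (s1 + s2))"
      using Log by (simp add: Lip_def lfv_def)
    then show "\<forall>\<^sub>F k in sequentially. norm (\<beta> (Suc k) - \<beta>star)
                 \<le> (1 + Lf L X Z a b c)^2 * Cf X Z a b / (2 * lf L X Z a b c (s1 + s2)) * (norm (\<beta> k - \<beta>star))^2"
      using main by simp
  next
    assume Lin: "L = Lin"
    show "\<forall>\<^sub>F k in sequentially. \<beta> (Suc k) = \<beta>star"
      using main by eventually_elim (simp add: Lin Lip_def)
  qed
qed


end
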